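(* Let $\langle\eta\rangle:=B_1/(\xi_L,\xi)$, where $B_1=\langle\eta,\xi,\xi_L\rangle$. Then $HH^n_{(1-n)}(B,\langle\eta\rangle)\cong k$ for $n\in\{1,2\}$ and $0$ otherwise; $HH^n_{(2-n)}(B,\langle\eta\rangle)\cong k$ for $n\in\{5,6\}$ and $0$ otherwise; $HH^n_{(3-n)}(B,\langle\eta\rangle)\cong k$ for $n\in\{9,10\}$ and $0$ otherwise; $HH^n_{(4-n)}(B,\langle\eta\rangle)\cong k$ for $n\in\{13,14\}$ and $0$ otherwise.
   Context: Let $k$ be a field with $\operatorname{char}k\neq2,3$. Let $B$ be the graded $k$-algebra with $k$-basis $\mathrm{id}_L,\mathrm{id}_{\mathcal O},\theta$ (degree $0$) and $\eta,\xi,\xi_L$ (degree $1$), whose only nonzero products of basis elements are $\mathrm{id}_L\mathrm{id}_L=\mathrm{id}_L$, $\mathrm{id}_{\mathcal O}\mathrm{id}_{\mathcal O}=\mathrm{id}_{\mathcal O}$, $\mathrm{id}_L\xi_L=\xi_L\mathrm{id}_L=\xi_L$, $\mathrm{id}_{\mathcal O}\xi=\xi\mathrm{id}_{\mathcal O}=\xi$, $\mathrm{id}_L\eta=\eta\,\mathrm{id}_{\mathcal O}=\eta$, $\mathrm{id}_{\mathcal O}\theta=\theta\,\mathrm{id}_L=\theta$, $\theta\eta=\xi$, $\eta\theta=\xi_L$. Let $R=k\langle\mathrm{id}_L,\mathrm{id}_{\mathcal O}\rangle$, $B_+=\langle\theta,\eta,\xi,\xi_L\rangle$, $B=R\oplus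 B_+$; tensor products are over $R$. $B_1=\langle\eta,\xi,\xi_L\rangle$ and $(\xi_L,\xi)=\langle\xi_L,\xi\rangle$ are sub-bimodules of $B$. For a graded $B$-bimodule $M$, the reduced Hochschild complex is $C^n(B,M)=\operatorname{Hom}_{R\text{-}R}(B_+^{\otimes_R n},M)$ with $\delta(\phi)(a_0,\dots,a_n)=a_0\phi(a_1,\dots,a_n)+\sum_{i=1}^n(-1)^i\phi(a_0,\dots,a_{i-1}a_i,\dots,a_n)+(-1)^{n+1}\phi(a_0,\dots,a_{n-1})a_n$; $HH^n_{(m)}(B,M)$ is the cohomology of the subcomplex of cochains homogeneous of internal degree $m$ ($\deg\phi(x)=\deg x+m$). *)

theory Defs
  imports Complex_Main "HOL-Library.Function_Algebras"
begin

datatype bas = idL | idO | theta | eta | xi | xiL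

text \<open>Product of two basis elements: Some c if the product is the basis element c, None if it is 0.\<close>
fun mult :: "bas \<Rightarrow> bas \<Rightarrow> bas option" where
  "mult idL idL = Some idL"
| "mult idO idO = Some idO"
| "mult idL xiL = Some xiL"
| "mult xiL idL = Some xiL"
| "mult idO xi = Some xi"
| "mult xi idO = Some xi"
| "mult idL eta = Some eta"
| "mult eta idO = Some eta"
| "mult idO theta = Some theta"
| "mult theta idL = Some theta"
| "mult theta eta = Some xi"
| "mult eta theta = Some xiL"
| "mult _ _ = None"

fun deg :: "bas \<Rightarrow> nat" where
  "deg idL = 0" | "deg idO = 0" | "deg theta = 0"
| "deg eta = 1" | "deg xi = 1" | "deg xiL = 1"

definition Rbas :: "bas set" where "Rbas = {idL, idO}"
definition Bplus :: "bas set" where "Bplus = {theta, eta, xi, xiL}"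
definition B1bas :: "bas set" where "B1bas = {eta, xi, xiL}"
definition Ibas :: "bas set" where "Ibas = {xiL, xi}"

text \<open>The bimodule M = B_1/(xi_L, xi): its basis is the set of classes of the basis elements of
  B_1 not in the sub-bimodule spanned by xi_L, xi.  Elements of M are coordinate functions
  bas => 'k supported on Mbas.\<close>
definition Mbas :: "bas set" where "Mbas = B1bas - Ibas"

definition lactM :: "bas \<Rightarrow> (bas \<Rightarrow> 'k::field) \<Rightarrow> bas \<Rightarrow> 'k" where
  "lactM b v y = (if y \<in> Mbas then (\<Sum>z\<in>Mbas. if mult b z = Some y then v z else 0) else 0)"

definition ractM :: "(bas \<Rightarrow> 'k::field) \<Rightarrow> bas \<Rightarrow> bas \<Rightarrow> 'k" where
  "ractM v b y = (if y \<in> Mbas then (\<Sum>z\<in>Mbas. if mult z b = Some y then v z else 0) else 0)"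

text \<open>A basis element of B_+^{\<otimes>_R n} is written (e, [a_1,...,a_n]) with e in R the left idempotent
  (e a_1 = a_1); consecutive factors must share an idempotent (otherwise the tensor over R is 0).
  For n = 0 the basis of R is (idL, []) and (idO, []).\<close>
fun lcompat :: "bas \<Rightarrow> bas list \<Rightarrow> bool" where
  "lcompat e [] = True"
| "lcompat e (a # _) = (mult e a = Some a)"

definition rcompat :: "bas \<times> bas list \<Rightarrow> bas \<Rightarrow> bool" where
  "rcompat x f = (if snd x = [] then fst x = f else mult (last (snd x)) f = Some (last (snd x)))"

definition TB :: "nat \<Rightarrow> (bas \<times> bas list) set" where
  "TB n = {(e, p). e \<in> Rbas \<and> length p = n \<and> set p \<subseteq> Bplus \<and> lcompat e p \<and>
     (\<forall>i. Suc i < n \<longrightarrow> (\<exists>f\<in>Rbas. mult (p ! i) f = Some (p ! i) \<and>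
                                     mult f (p ! Suc i) = Some (p ! Suc i)))}"

definition tdeg :: "bas list \<Rightarrow> nat" where "tdeg p = sum_list (map deg p)"

text \<open>A cochain phi is given by its values on basis tensors: phi x y is the y-coordinate of phi(x) in M.
  C n m = homogeneous R-R-bimodule maps of internal degree m.\<close>
definition Cochains :: "nat \<Rightarrow> int \<Rightarrow> ((bas \<times> bas list) \<Rightarrow> bas \<Rightarrow> 'k::field) set" where
  "Cochains n m = {phi.
     (\<forall>x y. phi x y \<noteq> 0 \<longrightarrow> x \<in> TB n \<and> y \<in> Mbas \<and> int (deg y) = int (tdeg (snd x)) + m) \<and>
     (\<forall>e\<in>Rbas. \<forall>x\<in>TB n.
        lactM e (phi x) = (if fst x = e then phi x else (\<lambda>_. 0)) \<and>
        ractM (phi x) e = (if rcompat x e then phi x else (\<lambda>_. 0)))}"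

text \<open>Value of phi on the tensor a_1 \<otimes> ... \<otimes> a_n (= 1 * (a_1 \<otimes> ... \<otimes> a_n) = sum over idempotents e);
  for the empty list this is phi(1_R).\<close>
definition ev :: "((bas \<times> bas list) \<Rightarrow> bas \<Rightarrow> 'k::field) \<Rightarrow> bas list \<Rightarrow> bas \<Rightarrow> 'k" where
  "ev phi p y = (\<Sum>e\<in>{e\<in>Rbas. lcompat e p}. phi (e, p) y)"

definition hdelta :: "nat \<Rightarrow> ((bas \<times> bas list) \<Rightarrow> bas \<Rightarrow> 'k::field) \<Rightarrow> (bas \<times> bas list) \<Rightarrow> bas \<Rightarrow> 'k" where
  "hdelta n phi x y = (if x \<in> TB (Suc n) then
     (let a = snd x in
        lactM (hd a) (ev phi (tl a)) y
      + (\<Sum>i\<in>{1..n}. (-1) ^ i *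
           (case mult (a ! (i - 1)) (a ! i) of None \<Rightarrow> 0
            | Some c \<Rightarrow> ev phi (take (i - 1) a @ c # drop (Suc i) a) y))
      + (-1) ^ (Suc n) * ractM (ev phi (butlast a)) (last a) y)
     else 0)"

definition cscale :: "'k::field \<Rightarrow> ((bas \<times> bas list) \<Rightarrow> bas \<Rightarrow> 'k) \<Rightarrow> ((bas \<times> bas list) \<Rightarrow> bas \<Rightarrow> 'k)" where
  "cscale c phi = (\<lambda>x y. c * phi x y)"

definition Cocycles :: "nat \<Rightarrow> int \<Rightarrow> ((bas \<times> bas list) \<Rightarrow> bas \<Rightarrow> 'k::field) set" where
  "Cocycles n m = {phi \<in> Cochains n m. hdelta n phi = 0}"

definition Coboundaries :: "nat \<Rightarrow> int \<Rightarrow> ((bas \<times> bas list) \<Rightarrow> bas \<Rightarrow> 'k::field) set" where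
  "Coboundaries n m = (if n = 0 then {0} else hdelta (n - 1) ` Cochains (n - 1) m)"

definition HHdim :: "'k::field itself \<Rightarrow> nat \<Rightarrow> int \<Rightarrow> nat" where
  "HHdim _ n m = vector_space.dim (cscale :: 'k \<Rightarrow> _) (Cocycles n m :: (_ \<Rightarrow> _ \<Rightarrow> 'k) set)
               - vector_space.dim (cscale :: 'k \<Rightarrow> _) (Coboundaries n m :: (_ \<Rightarrow> _ \<Rightarrow> 'k) set)"

end

theory Submission
  imports Defs
begin

context vector_space begin

lemma fin_indep:
  assumes "V \<subseteq> span F" "finite F" "B \<subseteq> V" "independent B"
  shows "finite B"
  using independent_span_bound[OF assms(2,4)] assms(1,3) span_mono span_span
  by (meson order_trans)

lemma indep_union_aux:
  assumes indR: "independent R" and indQ: "independent (P \<union> C)"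
    and disj: "\<And>x. x \<in> span R \<Longrightarrow> x \<in> span (P \<union> C) \<Longrightarrow> x \<in> span P"
    and finC: "finite C" and CP: "C \<inter> P = {}"
  shows "independent (R \<union> C)"
proof -
  have "independent (R \<union> C')" if "C' \<subseteq> C" for C'
  proof -
    have "finite C'" using that finC finite_subset by blast
    then show ?thesis using that
    proof (induction C' rule: finite_subset_induct')
      case empty
      then show ?case using indR by simp
    next
      case (insert c F)
      have "c \<notin> span (R \<union> F)"
      proof
        assume "c \<in> span (R \<union> F)"
        then obtain x y where xy: "c = x + y" "x \<in> span R" "y \<in> span F"
          unfolding span_Un by blast
        have cPC: "c \<in> span (P \<union> C)" by (rule span_base) (use insert.hyps(2) in blast)
        have "span F \<subseteq> span (P \<union> C)" by (rule span_mono) (use insert.hyps(3) in blast)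
        then have yPC: "y \<in> span (P \<union> C)" using xy(3) by blast
        have "x = c - y" using xy(1) by (simp add: algebra_simps)
        then have "x \<in> span (P \<union> C)" using span_diff[OF cPC yPC] by simp
        then have xP: "x \<in> span P" using disj xy(2) by blast
        have sub: "P \<union> F \<subseteq> (P \<union> C) - {c}"
          using insert.hyps(2,3,4) CP by blast
        have "span P \<subseteq> span ((P \<union> C) - {c})" "span F \<subseteq> span ((P \<union> C) - {c})"
          using sub by (intro span_mono; blast)+
        then have "c \<in> span ((P \<union> C) - {c})"
          using xy(1) xP xy(3) span_add by blast
        moreover have "c \<in> P \<union> C" using insert.hyps(2) by blast
        ultimately have "dependent (P \<union> C)" unfolding dependent_def by blast
        then show False using indQ by simp
      qed
      then have "independent (insert c (R \<union> F))"
        using insert.IH independent_insertI by blast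
      then show ?case by simp
    qed
  qed
  then show ?thesis by blast
qed

lemma quot_dim:
  assumes sZ: "subspace Z" and sBc: "subspace Bc" and sZq: "subspace Zq" and sBq: "subspace Bq"
    and BqZq: "Bq \<subseteq> Zq" and BqBc: "Bq \<subseteq> Bc" and ZqZ: "Zq \<subseteq> Z" and BcZ: "Bc \<subseteq> Z"
    and sum: "\<And>z. z \<in> Z \<Longrightarrow> \<exists>a b. a \<in> Zq \<and> b \<in> Bc \<and> z = a + b"
    and int: "Zq \<inter> Bc \<subseteq> Bq"
    and fin: "Z \<subseteq> span F" "finite F"
  shows "dim Z - dim Bc = dim Zq - dim Bq"
proof -
  obtain P where P: "P \<subseteq> Bq" "independent P" "Bq \<subseteq> span P"
    using maximal_independent_subset by blast
  obtain Q where Q: "P \<subseteq> Q" "Q \<subseteq> Zq" "independent Q" "Zq \<subseteq> span Q"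
    using maximal_independent_subset_extend[of P Zq] P BqZq by blast
  obtain R where R: "P \<subseteq> R" "R \<subseteq> Bc" "independent R" "Bc \<subseteq> span R"
    using maximal_independent_subset_extend[of P Bc] P BqBc by blast
  define C where "C = Q - P"
  have finQ: "finite Q" using fin_indep[OF fin _ Q(3)] Q(2) ZqZ by blast
  have finR: "finite R" using fin_indep[OF fin _ R(3)] R(2) BcZ by blast
  have finP: "finite P" using finQ Q(1) finite_subset by blast
  have finC: "finite C" unfolding C_def using finQ by simp
  have QPC: "Q = P \<union> C" unfolding C_def using Q(1) by auto
  have CQ: "C \<subseteq> Q" and CPd: "C \<inter> P = {}" unfolding C_def by auto
  have spP: "span P = Bq" using P(1) sBq span_minimal P(3) by blast
  have spQ: "span Q = Zq" using Q(2) sZq span_minimal Q(4) by blast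
  have spR: "span R = Bc" using R(2) sBc span_minimal R(4) by blast
  have spPC: "span (P \<union> C) = Zq" using QPC spQ by simp
  have disj: "\<And>x. x \<in> span R \<Longrightarrow> x \<in> span (P \<union> C) \<Longrightarrow> x \<in> span P"
  proof -
    fix x assume "x \<in> span R" "x \<in> span (P \<union> C)"
    then have "x \<in> Zq \<inter> Bc" using spR spPC by blast
    then show "x \<in> span P" using int spP by blast
  qed
  have indRC: "independent (R \<union> C)"
    by (rule indep_union_aux[OF R(3) _ disj finC]) (use QPC Q(3) CPd in auto)
  have RC: "R \<inter> C = {}"
  proof (rule ccontr)
    assume "R \<inter> C \<noteq> {}"
    then obtain c where c: "c \<in> R" "c \<in> C" by blast
    have "c \<in> span R" by (rule span_base) (rule c(1))
    moreover have "c \<in> span (P \<union> C)" by (rule span_base) (use c(2) in blast)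
    ultimately have "c \<in> span P" by (rule disj)
    moreover have "c \<notin> span (Q - {c})"
    proof
      assume "c \<in> span (Q - {c})"
      then have "dependent Q" unfolding dependent_def using c CQ by blast
      then show False using Q(3) by simp
    qed
    moreover have "span P \<subseteq> span (Q - {c})" using c CPd Q(1) by (intro span_mono) auto
    ultimately show False by blast
  qed
  have "dim Z = card (R \<union> C)"
  proof (rule dim_unique)
    show "R \<union> C \<subseteq> Z" using R(2) BcZ CQ Q(2) ZqZ by auto
    show "Z \<subseteq> span (R \<union> C)"
    proof
      fix z assume "z \<in> Z"
      then obtain a b where ab: "a \<in> Zq" "b \<in> Bc" "z = a + b" using sum by blast
      have "span Q \<subseteq> span (R \<union> C)" using QPC R(1) by (intro span_mono) auto
      then have "a \<in> span (R \<union> C)" using ab(1) spQ by blast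
      moreover have "b \<in> span (R \<union> C)" using ab(2) spR span_mono[of R "R \<union> C"] by blast
      ultimately show "z \<in> span (R \<union> C)" unfolding ab(3) by (rule span_add)
    qed
  qed (use indRC in auto)
  also have "\<dots> = card R + card C" using card_Un_disjoint[OF finR finC RC] .
  finally have dZ: "dim Z = card R + card C" .
  have dBc: "dim Bc = card R" using dim_unique[OF R(2) R(4) R(3)] by simp
  have dZq: "dim Zq = card P + card C"
  proof -
    have "P \<inter> C = {}" using CPd by blast
    then have "card Q = card P + card C" using QPC card_Un_disjoint[OF finP finC] by simp
    then show ?thesis using dim_unique[OF Q(2) Q(4) Q(3) refl] by simp
  qed
  have dBq: "dim Bq = card P" using dim_unique[OF P(1) P(3) P(2)] by simp
  show ?thesis using dZ dBc dZq dBq by simp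
qed

lemma dim_zero_space: "dim {0} = 0"
proof -
  have "span {} = span {0::'b}" by simp
  then show ?thesis using dim_eq_card[of "{}" "{0}"] independent_empty by simp
qed

end

context vector_space_pair begin

lemma dim_image_eq_gen:
  assumes lf: "Vector_Spaces.linear s1 s2 f"
    and fi: "inj_on f (vs1.span S)"
  shows "vs2.dim (f ` S) = vs1.dim S"
proof -
  interpret lf: Vector_Spaces.linear s1 s2 f by fact
  obtain B where B: "B \<subseteq> S" "vs1.independent B" "S \<subseteq> vs1.span B" "card B = vs1.dim S"
    using vs1.basis_exists[of S] by auto
  then have "vs1.span S = vs1.span B"
    using vs1.span_mono[of B S] vs1.span_mono[of S "vs1.span B"] vs1.span_span[of B] by auto
  moreover have "card (f ` B) = card B"
    using assms card_image[of f B] inj_on_subset[of f "vs1.span S" B] B vs1.span_superset by auto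
  moreover have "(f ` B) \<subseteq> (f ` S)"
    using B by auto
  moreover have "vs2.independent (f ` B)"
  proof
    assume "vs2.dependent (f ` B)"
    moreover have "inj_on f (vs1.span B)" using fi \<open>vs1.span S = vs1.span B\<close> by simp
    ultimately have "vs1.dependent B" by (rule lf.dependent_inj_imageD)
    then show False using B(2) by simp
  qed
  moreover have "vs2.span (f ` B) = vs2.span (f ` S)"
    using \<open>vs1.span S = vs1.span B\<close> by (simp add: lf.span_image)
  ultimately show ?thesis
    using vs2.dim_eq_card[of "f ` B" "f ` S"] B(4) by simp
qed

end

definition wt :: "bool list \<Rightarrow> nat" where
  "wt w = sum_list (map (\<lambda>b. if b then 2 else 1) w)"

lemma wt_Nil[simp]: "wt [] = 0" and wt_Cons[simp]: "wt (b # w) = (if b then 2 else 1) + wt w"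
  by (simp_all add: wt_def)

lemma wt_append[simp]: "wt (u @ v) = wt u + wt v"
  by (simp add: wt_def)

lemma wt_bounds: "length w \<le> wt w" "wt w \<le> 2 * length w"
  by (induction w) auto

definition ad :: "(bool list \<Rightarrow> 'k::field) \<Rightarrow> bool list \<Rightarrow> 'k" where
  "ad \<phi> w = (\<Sum>i\<in>{1..length w - 1}. (-1) ^ i *
      (if \<not> w ! (i - 1) \<and> \<not> w ! i then \<phi> (take (i - 1) w @ True # drop (Suc i) w) else 0))"

lemma ad_Nil[simp]: "ad \<phi> [] = 0"
  by (simp add: ad_def)

lemma ad_Cons:
  "ad \<phi> (b # v) = (case v of [] \<Rightarrow> 0 | c # v' \<Rightarrow> (if \<not> b \<and> \<not> c then - \<phi> (True # v') else 0))
     - ad (\<lambda>u. \<phi> (b # u)) v"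
proof (cases v)
  case Nil
  then show ?thesis by (simp add: ad_def)
next
  case (Cons c v')
  let ?f = "\<lambda>i. (-1) ^ i * (if \<not> (b # v) ! (i - 1) \<and> \<not> (b # v) ! i
      then \<phi> (take (i - 1) (b # v) @ True # drop (Suc i) (b # v)) else 0)"
  have "ad \<phi> (b # v) = sum ?f {1..length v}" by (simp add: ad_def)
  also have "\<dots> = ?f 1 + sum ?f {Suc 1..Suc (length v - 1)}"
  proof -
    have "sum ?f {1..length v} = ?f 1 + sum ?f {Suc 1..length v}"
      by (rule sum.atLeast_Suc_atMost) (simp add: Cons)
    moreover have "Suc (length v - 1) = length v" using Cons by simp
    ultimately show ?thesis by simp
  qed
  also have "sum ?f {Suc 1..Suc (length v - 1)} = sum (\<lambda>j. ?f (Suc j)) {1..length v - 1}"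
    by (rule sum.shift_bounds_cl_Suc_ivl)
  also have "\<dots> = - ad (\<lambda>u. \<phi> (b # u)) v"
    unfolding ad_def sum_negf[symmetric]
  proof (rule sum.cong[OF refl])
    fix j assume j: "j \<in> {1..length v - 1}"
    then obtain j' where j': "j = Suc j'" by (cases j) auto
    show "?f (Suc j) = - ((-1) ^ j * (if \<not> v ! (j - 1) \<and> \<not> v ! j
        then \<phi> (b # (take (j - 1) v @ True # drop (Suc j) v)) else 0))"
      using j' by simp
  qed
  finally show ?thesis using Cons by simp
qed

lemma ad_single[simp]: "ad \<phi> [b] = 0"
  by (simp add: ad_def)

lemma ad_add: "ad (\<lambda>u. f u + g u) w = ad f w + ad g w"
  unfolding ad_def sum.distrib[symmetric] by (intro sum.cong refl) (simp add: algebra_simps)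

lemma ad_scale: "ad (\<lambda>u. c * f u) w = c * ad f w"
  unfolding ad_def sum_distrib_left by (intro sum.cong refl) (simp add: algebra_simps)

lemma ad_neg: "ad (\<lambda>u. - f u) w = - ad f w"
  using ad_scale[of "-1" f w] by simp

lemma ad_zero[simp]: "ad (\<lambda>u. 0) w = 0"
  using ad_scale[of 0 "\<lambda>u. 0" w] by simp

lemma ad_zero'[simp]: "ad 0 w = 0"
  using ad_zero by (simp add: zero_fun_def)

lemma ad_diff: "ad (\<lambda>u. f u - g u) w = ad f w - ad g w"
  using ad_add[of f "\<lambda>u. - g u" w] ad_neg[of g w] by simp

lemma ad_cong: "(\<And>u. f u = g u) \<Longrightarrow> ad f w = ad g w"
proof -
  assume "\<And>u. f u = g u"
  then have "f = g" by (rule ext)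
  then show ?thesis by simp
qed

lemma ad_ad: "ad (ad \<phi>) w = 0"
proof (induction w arbitrary: \<phi>)
  case Nil
  then show ?case by simp
next
  case (Cons b v)
  define g where "g u = (case u of [] \<Rightarrow> 0 | c # v' \<Rightarrow> (if \<not> b \<and> \<not> c then - \<phi> (True # v') else 0))" for u
  have e: "ad \<phi> (b # u) = g u - ad (\<lambda>u. \<phi> (b # u)) u" for u
    unfolding g_def by (rule ad_Cons)
  have "ad (\<lambda>u. ad \<phi> (b # u)) v = ad g v - ad (ad (\<lambda>u. \<phi> (b # u))) v"
    unfolding e by (rule ad_diff)
  also have "ad (ad (\<lambda>u. \<phi> (b # u))) v = 0" by (rule Cons.IH)
  finally have 1: "ad (\<lambda>u. ad \<phi> (b # u)) v = ad g v" by simp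
  have 2: "ad g v = (case v of [] \<Rightarrow> 0 | c # v' \<Rightarrow> (if \<not> b \<and> \<not> c then ad (\<lambda>u. \<phi> (True # u)) v' else 0))"
  proof (cases v)
    case Nil then show ?thesis by simp
  next
    case (Cons c v')
    have "ad (\<lambda>u. g (c # u)) v' = (if \<not> b \<and> \<not> c then - ad (\<lambda>u. \<phi> (True # u)) v' else 0)"
      by (simp add: g_def ad_neg)
    moreover have "(case v' of [] \<Rightarrow> 0 | d # v'' \<Rightarrow> (if \<not> c \<and> \<not> d then - g (True # v'') else 0)) = 0"
      by (cases v') (auto simp: g_def)
    ultimately show ?thesis using Cons by (simp add: ad_Cons[of g c v'])
  qed
  have 3: "(case v of [] \<Rightarrow> 0 | c # v' \<Rightarrow> (if \<not> b \<and> \<not> c then - ad \<phi> (True # v') else 0))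
      = (case v of [] \<Rightarrow> 0 | c # v' \<Rightarrow> (if \<not> b \<and> \<not> c then ad (\<lambda>u. \<phi> (True # u)) v' else 0))"
    by (cases v) (auto simp: ad_Cons[of \<phi> True] split: list.split)
  show ?case by (simp add: ad_Cons[of "ad \<phi>" b v] 1 2 3)
qed

definition acs :: "'k::field \<Rightarrow> (bool list \<Rightarrow> 'k) \<Rightarrow> bool list \<Rightarrow> 'k" where
  "acs c f = (\<lambda>w. c * f w)"

lemma vs_acs: "vector_space (acs :: 'k::field \<Rightarrow> _)"
  by unfold_locales (auto simp: acs_def algebra_simps fun_eq_iff)

interpretation A: vector_space "acs :: 'k::field \<Rightarrow> _"
  by (rule vs_acs)

lemma acs_apply[simp]: "acs c f w = c * f w" by (simp add: acs_def)

definition AC :: "nat \<Rightarrow> nat \<Rightarrow> (bool list \<Rightarrow> 'k::field) set" where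
  "AC N n = {\<phi>. \<forall>w. \<phi> w \<noteq> 0 \<longrightarrow> wt w = N \<and> length w = n}"

definition AZ :: "nat \<Rightarrow> nat \<Rightarrow> (bool list \<Rightarrow> 'k::field) set" where
  "AZ N n = {\<phi> \<in> AC N n. ad \<phi> = 0}"

definition AB :: "nat \<Rightarrow> nat \<Rightarrow> (bool list \<Rightarrow> 'k::field) set" where
  "AB N n = (if n = 0 then {0} else ad ` AC N (n - 1))"

definition ahh :: "'k::field itself \<Rightarrow> nat \<Rightarrow> nat \<Rightarrow> nat" where
  "ahh _ N n = A.dim (AZ N n :: (bool list \<Rightarrow> 'k) set) - A.dim (AB N n :: (bool list \<Rightarrow> 'k) set)"

lemma ACD: "\<phi> \<in> AC N n \<Longrightarrow> \<phi> w \<noteq> 0 \<Longrightarrow> wt w = N \<and> length w = n"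
  by (auto simp: AC_def)

lemma ACI: "(\<And>w. \<phi> w \<noteq> 0 \<Longrightarrow> wt w = N \<and> length w = n) \<Longrightarrow> \<phi> \<in> AC N n"
  by (auto simp: AC_def)

lemma split_at2:
  assumes "1 \<le> i" "i < length w"
  shows "take (i - 1) w @ w ! (i - 1) # w ! i # drop (Suc i) w = w"
proof -
  have "drop (i - 1) w = w ! (i - 1) # drop i w" using assms Cons_nth_drop_Suc[of "i - 1" w] by simp
  moreover have "drop i w = w ! i # drop (Suc i) w" using assms by (simp add: Cons_nth_drop_Suc)
  ultimately show ?thesis by (metis append_take_drop_id)
qed

lemma ad_AC:
  assumes "\<phi> \<in> AC N n"
  shows "ad \<phi> \<in> AC N (Suc n)"
proof (rule ACI)
  fix w assume "ad \<phi> w \<noteq> 0"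
  then obtain i where i: "i \<in> {1..length w - 1}" and
    nz: "(-1) ^ i * (if \<not> w ! (i - 1) \<and> \<not> w ! i then \<phi> (take (i - 1) w @ True # drop (Suc i) w) else 0) \<noteq> 0"
    unfolding ad_def by (meson sum.not_neutral_contains_not_neutral)
  have c: "\<not> w ! (i - 1)" "\<not> w ! i" and p: "\<phi> (take (i - 1) w @ True # drop (Suc i) w) \<noteq> 0"
    using nz by (auto split: if_splits)
  have il: "1 \<le> i" "i < length w" using i by auto
  from ACD[OF assms p] have h: "wt (take (i - 1) w @ True # drop (Suc i) w) = N"
    "length (take (i - 1) w @ True # drop (Suc i) w) = n" by auto
  have w: "w = take (i - 1) w @ w ! (i - 1) # w ! i # drop (Suc i) w"
    using split_at2[OF il] by simp
  have "wt w = N"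
    using h(1) c by (subst w) simp
  moreover have "length w = Suc n" using h(2) il by simp
  ultimately show "wt w = N \<and> length w = Suc n" by simp
qed

lemma AC_0: "0 \<in> AC N n" by (auto simp: AC_def)

lemma AC_add: "\<phi> \<in> AC N n \<Longrightarrow> \<psi> \<in> AC N n \<Longrightarrow> \<phi> + \<psi> \<in> AC N n"
proof (rule ACI)
  fix w assume a: "\<phi> \<in> AC N n" "\<psi> \<in> AC N n" "(\<phi> + \<psi>) w \<noteq> 0"
  then have "\<phi> w \<noteq> 0 \<or> \<psi> w \<noteq> 0" by auto
  then show "wt w = N \<and> length w = n" using ACD a by blast
qed

lemma AC_scale: "\<phi> \<in> AC N n \<Longrightarrow> acs c \<phi> \<in> AC N n"
  by (auto simp: AC_def)

lemma ad_plus: "ad (\<phi> + \<psi>) = ad \<phi> + ad \<psi>"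
  using ad_add[of \<phi> \<psi>] by (simp add: plus_fun_def fun_eq_iff)

lemma ad_acs: "ad (acs c \<phi>) = acs c (ad \<phi>)"
  using ad_scale[of c \<phi>] by (simp add: acs_def fun_eq_iff)

lemma ad_minus: "ad (\<phi> - \<psi>) = ad \<phi> - ad \<psi>"
proof -
  have e: "\<phi> - \<psi> = (\<lambda>u. \<phi> u - \<psi> u)" by (rule ext) simp
  show ?thesis by (rule ext) (simp add: e ad_diff)
qed

lemma ad_0[simp]: "ad 0 = 0"
  by (simp add: fun_eq_iff)

lemma ad_ad': "ad (ad \<phi>) = 0"
  by (simp add: fun_eq_iff ad_ad)

lemma linear_ad: "Vector_Spaces.linear acs acs (ad :: (bool list \<Rightarrow> 'k::field) \<Rightarrow> _)"
  unfolding Vector_Spaces.linear_iff using vs_acs ad_plus ad_acs by blast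

lemma subspace_AC: "A.subspace (AC N n :: (bool list \<Rightarrow> 'k::field) set)"
  unfolding A.subspace_def using AC_0 AC_add AC_scale by blast

lemma subspace_AZ: "A.subspace (AZ N n :: (bool list \<Rightarrow> 'k::field) set)"
  unfolding A.subspace_def AZ_def
proof (intro conjI ballI allI)
  show "0 \<in> {\<phi> \<in> AC N n. ad \<phi> = 0}" using AC_0 by simp
next
  fix x y :: "bool list \<Rightarrow> 'k" assume "x \<in> {\<phi> \<in> AC N n. ad \<phi> = 0}" "y \<in> {\<phi> \<in> AC N n. ad \<phi> = 0}"
  then have "x \<in> AC N n" "y \<in> AC N n" "ad x = 0" "ad y = 0" by auto
  then have "x + y \<in> AC N n" "ad (x + y) = 0" using AC_add[of x N n y] ad_plus[of x y] by auto
  then show "x + y \<in> {\<phi> \<in> AC N n. ad \<phi> = 0}" by simp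
next
  fix c and x :: "bool list \<Rightarrow> 'k" assume "x \<in> {\<phi> \<in> AC N n. ad \<phi> = 0}"
  then have "x \<in> AC N n" "ad x = 0" by auto
  then have "acs c x \<in> AC N n" "ad (acs c x) = 0" using AC_scale[of x N n c] ad_acs[of c x]
    by (auto simp: acs_def zero_fun_def)
  then show "acs c x \<in> {\<phi> \<in> AC N n. ad \<phi> = 0}" by simp
qed

lemma subspace_AB: "A.subspace (AB N n :: (bool list \<Rightarrow> 'k::field) set)"
proof (cases "n = 0")
  case True
  then show ?thesis by (simp add: AB_def A.subspace_def acs_def zero_fun_def)
next
  case False
  show ?thesis
    unfolding A.subspace_def AB_def using False
  proof (intro conjI ballI allI)
    show "0 \<in> (if n = 0 then {0} else ad ` AC N (n - 1))" using False AC_0 ad_0 by (metis image_eqI)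
    fix x y :: "bool list \<Rightarrow> 'k" assume "x \<in> (if n = 0 then {0} else ad ` AC N (n - 1))" "y \<in> (if n = 0 then {0} else ad ` AC N (n - 1))"
    then show "x + y \<in> (if n = 0 then {0} else ad ` AC N (n - 1))"
    proof -
      obtain a b where "a \<in> AC N (n - 1)" "b \<in> AC N (n - 1)" "x = ad a" "y = ad b"
        using \<open>x \<in> _\<close> \<open>y \<in> _\<close> False by auto
      then have "a + b \<in> AC N (n - 1)" "x + y = ad (a + b)" using AC_add[of a N "n - 1" b] ad_plus[of a b] by auto
      then show ?thesis using False by auto
    qed
  next
    fix c and x :: "bool list \<Rightarrow> 'k" assume "x \<in> (if n = 0 then {0} else ad ` AC N (n - 1))"
    then show "acs c x \<in> (if n = 0 then {0} else ad ` AC N (n - 1))"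
      using False by (auto simp: image_iff) (metis ad_acs AC_scale)
  qed
qed

lemma AZ_AC: "AZ N n \<subseteq> AC N n" by (auto simp: AZ_def)

lemma AB_AZ: "AB N n \<subseteq> AZ N n"
proof
  fix x assume "x \<in> AB N n"
  then show "x \<in> AZ N n"
  proof (cases "n = 0")
    case True
    then show ?thesis using \<open>x \<in> AB N n\<close> by (simp add: AB_def AZ_def AC_0)
  next
    case False
    then obtain \<phi> where "\<phi> \<in> AC N (n - 1)" "x = ad \<phi>" using \<open>x \<in> AB N n\<close> by (auto simp: AB_def)
    then show ?thesis using ad_AC[of \<phi> N "n - 1"] False ad_ad' by (simp add: AZ_def)
  qed
qed

lemma sum_fun_apply: "(sum f S) x = (\<Sum>y\<in>S. f y x)"
proof (cases "finite S")
  case True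
  then show ?thesis by (induction S rule: finite_induct) simp_all
qed simp

definition dl :: "bool list \<Rightarrow> bool list \<Rightarrow> 'k::field" where
  "dl w = (\<lambda>u. if u = w then 1 else 0)"

lemma finite_len: "finite {w :: bool list. length w = n}"
  using finite_lists_length_eq[of "UNIV :: bool set" n] by simp

lemma AC_span: "AC N n \<subseteq> A.span (dl ` {w :: bool list. length w = n} :: (bool list \<Rightarrow> 'k::field) set)"
proof
  fix \<phi> :: "bool list \<Rightarrow> 'k" assume \<phi>: "\<phi> \<in> AC N n"
  let ?S = "{w :: bool list. length w = n}"
  have "\<phi> = (\<Sum>w\<in>?S. acs (\<phi> w) (dl w))"
  proof
    fix u
    have "(\<Sum>w\<in>?S. acs (\<phi> w) (dl w)) u = (\<Sum>w\<in>?S. \<phi> w * (if u = w then 1 else 0))"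
      by (simp add: sum_fun_apply dl_def)
    also have "\<dots> = (if u \<in> ?S then \<phi> u else 0)"
      by (simp add: sum.delta'[OF finite_len] if_distrib cong: if_cong)
    also have "\<dots> = \<phi> u" using ACD[OF \<phi>, of u] by auto
    finally show "\<phi> u = (\<Sum>w\<in>?S. acs (\<phi> w) (dl w)) u" by simp
  qed
  also have "\<dots> \<in> A.span (dl ` ?S)"
    by (intro A.span_sum A.span_scale A.span_base) auto
  finally show "\<phi> \<in> A.span (dl ` ?S)" .
qed

lemma ad_T: "ad f (True # v) = - ad (\<lambda>u. f (True # u)) v"
  using ad_Cons[of f True v] by (simp split: list.split)

lemma ad_F: "ad f (False # v) = (case v of [] \<Rightarrow> 0 | c # v' \<Rightarrow> if c then 0 else - f (True # v'))
    - ad (\<lambda>u. f (False # u)) v"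
  using ad_Cons[of f False v] by (simp split: list.split)

definition exte :: "(bool list \<Rightarrow> 'k::field) \<Rightarrow> bool list \<Rightarrow> 'k" where
  "exte \<psi> w = (case w of False # True # u \<Rightarrow> \<psi> u | True # False # u \<Rightarrow> \<psi> u | _ \<Rightarrow> 0)"

definition rho :: "(bool list \<Rightarrow> 'k::field) \<Rightarrow> bool list \<Rightarrow> 'k" where
  "rho \<phi> u = \<phi> (False # True # u)"

lemma exte_simps[simp]:
  "exte \<psi> [] = 0" "exte \<psi> [b] = 0" "exte \<psi> (False # True # u) = \<psi> u"
  "exte \<psi> (True # False # u) = \<psi> u" "exte \<psi> (False # False # u) = 0"
  "exte \<psi> (True # True # u) = 0"
  by (simp_all add: exte_def split: bool.split)

lemma rho_exte[simp]: "rho (exte \<psi>) = \<psi>"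
  by (simp add: rho_def fun_eq_iff)

lemma ad_zero_fun: "(\<And>u. f u = 0) \<Longrightarrow> ad f w = 0"
  using ad_cong[of f "\<lambda>u. 0" w] by simp

lemma ad_exte: "ad (exte \<psi>) = exte (ad \<psi>)"
proof
  fix w
  show "ad (exte \<psi>) w = exte (ad \<psi>) w"
  proof (cases w)
    case Nil then show ?thesis by simp
  next
    case (Cons b v)
    show ?thesis
    proof (cases v)
      case Nil then show ?thesis using Cons by simp
    next
      case (Cons c u)
      show ?thesis
      proof (cases b)
        case True
        then have w: "w = True # c # u" using \<open>w = b # v\<close> Cons by simp
        show ?thesis
        proof (cases c)
          case True
          have "ad (\<lambda>x. exte \<psi> (True # True # x)) u = 0" by (rule ad_zero_fun) simp
          then show ?thesis using w True by (simp add: ad_T)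
        next
          case False
          have "ad (\<lambda>x. exte \<psi> (True # x)) (False # u) = - ad \<psi> u"
            by (simp add: ad_F split: list.split)
          then show ?thesis using w False by (simp add: ad_T)
        qed
      next
        case False
        then have w: "w = False # c # u" using \<open>w = b # v\<close> Cons by simp
        show ?thesis
        proof (cases c)
          case True
          have "ad (\<lambda>x. exte \<psi> (False # x)) (True # u) = - ad \<psi> u"
            by (simp add: ad_T)
          then show ?thesis using w True by (simp add: ad_F)
        next
          case False
          have z: "ad (\<lambda>x. exte \<psi> (False # False # x)) u = 0" by (rule ad_zero_fun) simp
          have "ad (\<lambda>x. exte \<psi> (False # x)) (False # u) =
              (case u of [] \<Rightarrow> 0 | d # u' \<Rightarrow> if d then 0 else - \<psi> u')"
            using z by (simp add: ad_F[of _ u] split: list.split)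
          moreover have "exte \<psi> (True # u) = (case u of [] \<Rightarrow> 0 | d # u' \<Rightarrow> if d then 0 else \<psi> u')"
            by (cases u) (auto split: bool.split)
          ultimately show ?thesis using w False
            by (simp add: ad_F[of _ "False # u"] split: list.split)
        qed
      qed
    qed
  qed
qed

lemma rho_ad: "rho (ad \<phi>) = ad (rho \<phi>)"
proof -
  have e: "rho \<phi> = (\<lambda>u. \<phi> (False # True # u))" by (rule ext) (simp add: rho_def)
  show ?thesis unfolding e by (rule ext) (simp add: rho_def ad_F ad_T)
qed

lemma exte_plus: "exte (a + b) = exte a + exte b"
  by (simp add: fun_eq_iff exte_def split: list.split bool.split)

lemma exte_acs: "exte (acs c a) = acs c (exte a)"
  by (simp add: fun_eq_iff exte_def split: list.split bool.split)

lemma exte_0[simp]: "exte 0 = 0"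
  by (simp add: fun_eq_iff exte_def split: list.split bool.split)

lemma rho_plus: "rho (a + b) = rho a + rho b" by (simp add: fun_eq_iff rho_def)
lemma rho_minus: "rho (a - b) = rho a - rho b" by (simp add: fun_eq_iff rho_def)
lemma rho_0[simp]: "rho 0 = 0" by (simp add: fun_eq_iff rho_def)

lemma linear_exte: "Vector_Spaces.linear acs acs (exte :: (bool list \<Rightarrow> 'k::field) \<Rightarrow> _)"
  unfolding Vector_Spaces.linear_iff using vs_acs exte_plus exte_acs by blast

lemma exte_AC:
  assumes "\<psi> \<in> AC M m" shows "exte \<psi> \<in> AC (M + 3) (m + 2)"
proof (rule ACI)
  fix w assume nz: "exte \<psi> w \<noteq> 0"
  then obtain b c u where w: "w = b # c # u" "\<psi> u \<noteq> 0" "b \<noteq> c"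
    by (auto simp: exte_def split: list.splits bool.splits)
  then show "wt w = M + 3 \<and> length w = m + 2" using ACD[OF assms w(2)] by auto
qed

lemma rho_AC:
  assumes "\<phi> \<in> AC N n" "rho \<phi> u \<noteq> 0" shows "wt u + 3 = N \<and> length u + 2 = n"
  using ACD[OF assms(1), of "False # True # u"] assms(2) by (simp add: rho_def)

lemma rho_AC':
  assumes "\<phi> \<in> AC (M + 3) (m + 2)" shows "rho \<phi> \<in> AC M m"
  using rho_AC[OF assms] by (intro ACI) auto

lemma K0:
  fixes \<phi> :: "bool list \<Rightarrow> 'k::field"
  assumes N: "2 \<le> N" and \<phi>: "\<phi> \<in> AC N n" and cyc: "ad \<phi> = 0"
    and r: "\<And>u. \<phi> (False # True # u) = 0"
  shows "\<phi> \<in> AB N n"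
proof (cases "n = 0")
  case True
  have "\<phi> = 0"
  proof
    fix w show "\<phi> w = 0 w" using ACD[OF \<phi>, of w] True N by (cases w) auto
  qed
  then show ?thesis using True by (simp add: AB_def)
next
  case False
  define \<chi> :: "bool list \<Rightarrow> 'k" where "\<chi> w = (case w of True # v \<Rightarrow> - \<phi> (False # False # v) | _ \<Rightarrow> 0)" for w
  have \<chi>T: "\<chi> (True # v) = - \<phi> (False # False # v)" for v by (simp add: \<chi>_def)
  have \<chi>F: "\<chi> (False # v) = 0" for v by (simp add: \<chi>_def)
  have \<chi>AC: "\<chi> \<in> AC N (n - 1)"
  proof (rule ACI)
    fix w assume "\<chi> w \<noteq> 0"
    then obtain v where w: "w = True # v" "\<phi> (False # False # v) \<noteq> 0"
      by (auto simp: \<chi>_def split: list.splits bool.splits)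
    then show "wt w = N \<and> length w = n - 1" using ACD[OF \<phi> w(2)] by auto
  qed
  have "ad \<chi> = \<phi>"
  proof
    fix w show "ad \<chi> w = \<phi> w"
    proof (cases w)
      case Nil
      then show ?thesis using ACD[OF \<phi>, of "[]"] N by auto
    next
      case (Cons b v)
      show ?thesis
      proof (cases b)
        case True
        have e1: "ad \<phi> (False # False # v) = 0" using cyc by simp
        have e2: "ad (\<lambda>u. \<phi> (False # u)) (False # v) = - ad (\<lambda>u. \<phi> (False # False # u)) v"
          using r by (simp add: ad_F[of _ v] split: list.split)
        have e3: "\<phi> (True # v) = ad (\<lambda>u. \<phi> (False # False # u)) v"
          using e1 e2 by (simp add: ad_F[of _ "False # v"])
        have "ad \<chi> (True # v) = ad (\<lambda>u. \<phi> (False # False # u)) v"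
          using ad_neg[of "\<lambda>u. \<phi> (False # False # u)" v] by (simp add: ad_T \<chi>T)
        then show ?thesis using Cons True e3 by simp
      next
        case False
        have z: "ad (\<lambda>u. \<chi> (False # u)) v = 0" by (rule ad_zero_fun) (simp add: \<chi>F)
        have "ad \<chi> (False # v) = \<phi> (False # v)"
        proof (cases v)
          case Nil
          then show ?thesis using ACD[OF \<phi>, of "[False]"] N by auto
        next
          case (Cons c v')
          then show ?thesis using z r by (cases c) (simp_all add: ad_F \<chi>T)
        qed
        then show ?thesis using Cons False by simp
      qed
    qed
  qed
  then show ?thesis using False \<chi>AC by (auto simp: AB_def)
qed

interpretation AA: vector_space_pair "acs :: 'k::field \<Rightarrow> _" "acs :: 'k::field \<Rightarrow> _"
  by unfold_locales

lemma finite_dl: "finite (dl ` {w :: bool list. length w = n})"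
  using finite_len by simp

lemma rec_step:
  "ahh TYPE('k::field) (M + 3) (m + 2) = ahh TYPE('k) M m"
proof -
  let ?Z = "AZ (M + 3) (m + 2) :: (bool list \<Rightarrow> 'k) set"
  let ?Bc = "AB (M + 3) (m + 2) :: (bool list \<Rightarrow> 'k) set"
  let ?Zq = "exte ` (AZ M m :: (bool list \<Rightarrow> 'k) set)"
  let ?Bq = "exte ` (AB M m :: (bool list \<Rightarrow> 'k) set)"
  have lin: "Vector_Spaces.linear acs acs (exte :: (bool list \<Rightarrow> 'k) \<Rightarrow> _)" by (rule linear_exte)
  have inj: "inj_on exte S" for S :: "(bool list \<Rightarrow> 'k) set"
    by (rule inj_on_inverseI[of _ rho]) simp
  have d1: "A.dim ?Zq = A.dim (AZ M m :: (bool list \<Rightarrow> 'k) set)"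
    by (rule AA.dim_image_eq_gen[OF lin inj])
  have d2: "A.dim ?Bq = A.dim (AB M m :: (bool list \<Rightarrow> 'k) set)"
    by (rule AA.dim_image_eq_gen[OF lin inj])
  have "A.dim ?Z - A.dim ?Bc = A.dim ?Zq - A.dim ?Bq"
  proof (rule A.quot_dim)
    show "A.subspace ?Z" by (rule subspace_AZ)
    show "A.subspace ?Bc" by (rule subspace_AB)
    show "A.subspace ?Zq" by (rule AA.linear_subspace_image[OF lin subspace_AZ])
    show "A.subspace ?Bq" by (rule AA.linear_subspace_image[OF lin subspace_AB])
    show "?Bq \<subseteq> ?Zq" using AB_AZ by blast
    show "?Bq \<subseteq> ?Bc"
    proof
      fix x assume "x \<in> ?Bq"
      then obtain \<psi> where \<psi>: "\<psi> \<in> AB M m" "x = exte \<psi>" by blast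
      show "x \<in> ?Bc"
      proof (cases "m = 0")
        case True
        then have "x = 0" using \<psi> by (simp add: AB_def)
        then show ?thesis using A.subspace_0[OF subspace_AB] by simp
      next
        case False
        then obtain \<chi> where \<chi>: "\<chi> \<in> AC M (m - 1)" "\<psi> = ad \<chi>" using \<psi> by (auto simp: AB_def)
        have "exte \<chi> \<in> AC (M + 3) (m - 1 + 2)" by (rule exte_AC[OF \<chi>(1)])
        moreover have "m - 1 + 2 = m + 2 - 1" using False by simp
        ultimately have "exte \<chi> \<in> AC (M + 3) (m + 2 - 1)" by simp
        moreover have "x = ad (exte \<chi>)" using \<psi> \<chi> by (simp add: ad_exte)
        ultimately have "x \<in> ad ` AC (M + 3) (m + 2 - 1)" by blast
        then show ?thesis unfolding AB_def by simp
      qed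
    qed
    show "?Zq \<subseteq> ?Z"
    proof
      fix x assume "x \<in> ?Zq"
      then obtain \<psi> where \<psi>: "\<psi> \<in> AZ M m" "x = exte \<psi>" by blast
      then show "x \<in> ?Z" using exte_AC[of \<psi> M m] by (auto simp: AZ_def ad_exte)
    qed
    show "?Bc \<subseteq> ?Z" by (rule AB_AZ)
    show "\<exists>a b. a \<in> ?Zq \<and> b \<in> ?Bc \<and> z = a + b" if z: "z \<in> ?Z" for z
    proof (intro exI conjI)
      have zAC: "z \<in> AC (M + 3) (m + 2)" and zc: "ad z = 0" using z by (auto simp: AZ_def)
      have r: "rho z \<in> AZ M m" using rho_AC'[OF zAC] zc rho_ad[of z] by (simp add: AZ_def)
      show "exte (rho z) \<in> ?Zq" using r by blast
      let ?b = "z - exte (rho z)"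
      have eAC: "exte (rho z) \<in> AC (M + 3) (m + 2)" using exte_AC rho_AC'[OF zAC] by blast
      have "?b \<in> AC (M + 3) (m + 2)"
        using A.subspace_diff[OF subspace_AC zAC eAC] .
      moreover have "ad ?b = 0" using zc r by (simp add: ad_minus ad_exte AZ_def)
      moreover have "\<And>u. ?b (False # True # u) = 0" by (simp add: rho_def)
      ultimately show "?b \<in> ?Bc" by (intro K0) auto
      show "z = exte (rho z) + ?b" by simp
    qed
    show "?Zq \<inter> ?Bc \<subseteq> ?Bq"
    proof
      fix x assume x: "x \<in> ?Zq \<inter> ?Bc"
      then obtain \<psi> where \<psi>: "\<psi> \<in> AZ M m" "x = exte \<psi>" by blast
      from x obtain \<chi> where \<chi>: "\<chi> \<in> AC (M + 3) (m + 1)" "x = ad \<chi>" by (auto simp: AB_def)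
      have "\<psi> = rho x" using \<psi> by simp
      also have "\<dots> = ad (rho \<chi>)" using \<chi> rho_ad by simp
      finally have pe: "\<psi> = ad (rho \<chi>)" .
      show "x \<in> ?Bq"
      proof (cases "m = 0")
        case True
        have "rho \<chi> = 0"
        proof
          fix u show "rho \<chi> u = 0 u" using rho_AC[OF \<chi>(1), of u] True by auto
        qed
        then have "\<psi> = 0" using pe by simp
        then show ?thesis using \<psi> True by (auto simp: AB_def)
      next
        case False
        have "\<chi> \<in> AC (M + 3) ((m - 1) + 2)" using \<chi>(1) False by simp
        then have "rho \<chi> \<in> AC M (m - 1)" by (rule rho_AC')
        then have "\<psi> \<in> AB M m" using pe False by (auto simp: AB_def)
        then show ?thesis using \<psi> by blast
      qed
    qed
    show "?Z \<subseteq> A.span (dl ` {w. length w = m + 2})" using AZ_AC AC_span by blast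
    show "finite (dl ` {w :: bool list. length w = m + 2} :: (bool list \<Rightarrow> 'k) set)" by (rule finite_dl)
  qed
  then show ?thesis unfolding ahh_def d1 d2 .
qed

lemma dim_zero_set: "A.dim ({0} :: (bool list \<Rightarrow> 'k::field) set) = 0"
  by (rule A.dim_zero_space)

lemma AC_empty:
  assumes "\<And>w :: bool list. wt w = N \<Longrightarrow> length w \<noteq> n"
  shows "AC N n = ({0} :: (bool list \<Rightarrow> 'k::field) set)"
proof -
  have "\<phi> = 0" if "\<phi> \<in> AC N n" for \<phi> :: "bool list \<Rightarrow> 'k"
  proof
    fix w show "\<phi> w = 0 w" using ACD[OF that, of w] assms by auto
  qed
  then show ?thesis using AC_0 by blast
qed

lemma ahh_zero:
  assumes "\<And>w :: bool list. wt w = N \<Longrightarrow> length w \<noteq> n"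
  shows "ahh TYPE('k::field) N n = 0"
proof -
  have "AZ N n = ({0} :: (bool list \<Rightarrow> 'k) set)"
    using AC_empty[OF assms] AZ_AC subspace_AZ A.subspace_0 by blast
  then show ?thesis by (simp add: ahh_def dim_zero_set)
qed

lemma ahh_two: "ahh TYPE('k::field) 2 n = 0"
proof -
  have "AZ 2 n \<subseteq> (AB 2 n :: (bool list \<Rightarrow> 'k) set)"
  proof
    fix \<phi> :: "bool list \<Rightarrow> 'k" assume "\<phi> \<in> AZ 2 n"
    then have a: "\<phi> \<in> AC 2 n" "ad \<phi> = 0" by (auto simp: AZ_def)
    have "\<phi> (False # True # u) = 0" for u using ACD[OF a(1), of "False # True # u"] by auto
    then show "\<phi> \<in> AB 2 n" using K0[of 2 \<phi> n] a by auto
  qed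
  then have "AZ 2 n = (AB 2 n :: (bool list \<Rightarrow> 'k) set)" using AB_AZ by blast
  then show ?thesis by (simp add: ahh_def)
qed

lemma ahh_one_word:
  assumes w0: "\<And>w :: bool list. wt w = N \<and> length w = n \<longleftrightarrow> w = w0"
    and nup: "\<And>w :: bool list. wt w = N \<Longrightarrow> length w \<noteq> Suc n"
    and ndown: "\<And>w :: bool list. n > 0 \<Longrightarrow> wt w = N \<Longrightarrow> length w \<noteq> n - 1"
  shows "ahh TYPE('k::field) N n = 1"
proof -
  have AZe: "AZ N n = (AC N n :: (bool list \<Rightarrow> 'k) set)"
  proof -
    have "ad \<phi> = 0" if "\<phi> \<in> AC N n" for \<phi> :: "bool list \<Rightarrow> 'k"
      using ad_AC[OF that] AC_empty[OF nup] by blast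
    then show ?thesis by (auto simp: AZ_def)
  qed
  have ABe: "AB N n = ({0} :: (bool list \<Rightarrow> 'k) set)"
  proof (cases "n = 0")
    case True then show ?thesis by (simp add: AB_def)
  next
    case False
    then have "AC N (n - 1) = ({0} :: (bool list \<Rightarrow> 'k) set)" using AC_empty ndown by blast
    then show ?thesis using False by (simp add: AB_def)
  qed
  have "A.dim (AC N n :: (bool list \<Rightarrow> 'k) set) = 1"
  proof (rule A.dim_unique[of "{dl w0}"])
    show "{dl w0} \<subseteq> (AC N n :: (bool list \<Rightarrow> 'k) set)"
      using w0[of w0] by (auto intro!: ACI simp: dl_def split: if_splits)
    show "AC N n \<subseteq> A.span {dl w0 :: bool list \<Rightarrow> 'k}"
    proof
      fix \<phi> :: "bool list \<Rightarrow> 'k" assume \<phi>: "\<phi> \<in> AC N n"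
      have "\<phi> = acs (\<phi> w0) (dl w0)"
      proof
        fix u show "\<phi> u = acs (\<phi> w0) (dl w0) u"
          using ACD[OF \<phi>, of u] w0[of u] by (auto simp: dl_def)
      qed
      then show "\<phi> \<in> A.span {dl w0}" by (metis A.span_base A.span_scale singletonI)
    qed
    have "dl w0 \<noteq> (0 :: bool list \<Rightarrow> 'k)" by (auto simp: dl_def fun_eq_iff)
    then show "A.independent {dl w0 :: bool list \<Rightarrow> 'k}" by simp
  qed simp
  then show ?thesis by (simp add: ahh_def AZe ABe dim_zero_set)
qed

lemma wt0: "wt w = 0 \<longleftrightarrow> w = []" by (cases w) auto

lemma wt1: "wt w = 1 \<longleftrightarrow> w = [False]"
proof (cases w)
  case Nil then show ?thesis by simp
next
  case (Cons b v)
  show ?thesis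
  proof (cases b)
    case True then show ?thesis using Cons by simp
  next
    case False then show ?thesis using Cons wt0[of v] by simp
  qed
qed

lemma ahh_formula:
  "ahh TYPE('k::field) N n = (if 2 * N = 3 * n \<or> 2 * N + 1 = 3 * n then 1 else 0)"
proof (induction N arbitrary: n rule: less_induct)
  case (less N)
  show ?case
  proof (cases "N \<le> 2")
    case True
    then consider "N = 0" | "N = 1" | "N = 2" by linarith
    then show ?thesis
    proof cases
      case 1
      show ?thesis
      proof (cases "n = 0")
        case True
        have "ahh TYPE('k) 0 0 = 1"
        proof (rule ahh_one_word[of _ _ "[]"])
          show "wt w = 0 \<and> length w = 0 \<longleftrightarrow> w = []" for w :: "bool list" using wt0[of w] by auto
          show "wt w = 0 \<Longrightarrow> length w \<noteq> Suc 0" for w :: "bool list" using wt0[of w] by auto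
        qed simp
        then show ?thesis using 1 True by simp
      next
        case False
        have "ahh TYPE('k) 0 n = 0"
        proof (rule ahh_zero)
          fix w :: "bool list" assume "wt w = 0"
          then have "length w = 0" using wt0[of w] by simp
          then show "length w \<noteq> n" using False by simp
        qed
        then show ?thesis using 1 False by simp
      qed
    next
      case 2
      show ?thesis
      proof (cases "n = 1")
        case True
        have "ahh TYPE('k) 1 1 = 1"
        proof (rule ahh_one_word[of _ _ "[False]"])
          show "wt w = 1 \<and> length w = 1 \<longleftrightarrow> w = [False]" for w using wt1[of w] by auto
          show "wt w = 1 \<Longrightarrow> length w \<noteq> Suc 1" for w using wt1[of w] by auto
          show "0 < 1 \<Longrightarrow> wt w = 1 \<Longrightarrow> length w \<noteq> 1 - 1" for w using wt1[of w] by auto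
        qed
        then show ?thesis using 2 True by simp
      next
        case False
        have "ahh TYPE('k) 1 n = 0"
        proof (rule ahh_zero)
          fix w :: "bool list" assume "wt w = 1"
          then have "w = [False]" using wt1[of w] by simp
          then show "length w \<noteq> n" using False by simp
        qed
        then show ?thesis using 2 False by simp
      qed
    next
      case 3
      moreover have "\<not> (2 * N = 3 * n \<or> 2 * N + 1 = 3 * n)" using 3 by presburger
      ultimately show ?thesis using ahh_two by simp
    qed
  next
    case False
    define M where "M = N - 3"
    have M: "N = M + 3" using False M_def by simp
    show ?thesis
    proof (cases "n < 2")
      case True
      have "ahh TYPE('k) N n = 0"
      proof (rule ahh_zero)
        fix w :: "bool list" assume "wt w = N"
        then have "N \<le> 2 * length w" using wt_bounds(2)[of w] by simp
        then show "length w \<noteq> n" using True False by auto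
      qed
      moreover have "\<not> (2 * N = 3 * n \<or> 2 * N + 1 = 3 * n)" using True False by auto
      ultimately show ?thesis by simp
    next
      case nf: False
      define m where "m = n - 2"
      have m: "n = m + 2" using nf m_def by simp
      have "ahh TYPE('k) N n = ahh TYPE('k) M m" using rec_step M m by simp
      also have "\<dots> = (if 2 * M = 3 * m \<or> 2 * M + 1 = 3 * m then 1 else 0)"
        using less.IH[of M m] M by simp
      also have "(2 * M = 3 * m \<or> 2 * M + 1 = 3 * m) = (2 * N = 3 * n \<or> 2 * N + 1 = 3 * n)"
        using M m by auto
      finally show ?thesis .
    qed
  qed
qed

fun src :: "bas \<Rightarrow> bas" where
  "src theta = idO" | "src eta = idL" | "src xi = idO" | "src xiL = idL" | "src idL = idL" | "src idO = idO"

fun tgt :: "bas \<Rightarrow> bas" where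
  "tgt theta = idL" | "tgt eta = idO" | "tgt xi = idO" | "tgt xiL = idL" | "tgt idL = idL" | "tgt idO = idO"

fun valid :: "bas \<Rightarrow> bas list \<Rightarrow> bool" where
  "valid e [] = (e \<in> Rbas)"
| "valid e (a # p) = (e \<in> Rbas \<and> a \<in> Bplus \<and> src a = e \<and> valid (tgt a) p)"

fun endst :: "bas \<Rightarrow> bas list \<Rightarrow> bas" where
  "endst e [] = e"
| "endst e (a # p) = endst (tgt a) p"

definition enc :: "bas list \<Rightarrow> bool list" where
  "enc p = map (\<lambda>a. a = xi \<or> a = xiL) p"

fun letter :: "bas \<Rightarrow> bool \<Rightarrow> bas" where
  "letter idL False = eta" | "letter idL True = xiL"
| "letter s False = theta" | "letter s True = xi"

fun dec :: "bas \<Rightarrow> bool list \<Rightarrow> bas list" where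
  "dec s [] = []"
| "dec s (b # c) = letter s b # dec (tgt (letter s b)) c"

lemma Rbas_iff: "e \<in> Rbas \<longleftrightarrow> e = idL \<or> e = idO" by (auto simp: Rbas_def)
lemma Bplus_iff: "a \<in> Bplus \<longleftrightarrow> a = theta \<or> a = eta \<or> a = xi \<or> a = xiL" by (auto simp: Bplus_def)

lemma mult_left: "e \<in> Rbas \<Longrightarrow> a \<in> Bplus \<Longrightarrow> mult e a = Some a \<longleftrightarrow> e = src a"
  by (auto simp: Rbas_iff Bplus_iff)

lemma mult_right: "f \<in> Rbas \<Longrightarrow> a \<in> Bplus \<Longrightarrow> mult a f = Some a \<longleftrightarrow> f = tgt a"
  by (auto simp: Rbas_iff Bplus_iff)

lemma tgt_R: "a \<in> Bplus \<Longrightarrow> tgt a \<in> Rbas" by (auto simp: Rbas_iff Bplus_iff)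
lemma src_R: "a \<in> Bplus \<Longrightarrow> src a \<in> Rbas" by (auto simp: Rbas_iff Bplus_iff)

lemma compat_iff: "a \<in> Bplus \<Longrightarrow> b \<in> Bplus \<Longrightarrow>
  (\<exists>f\<in>Rbas. mult a f = Some a \<and> mult f b = Some b) \<longleftrightarrow> tgt a = src b"
  by (auto simp: Rbas_def Bplus_iff)

lemma all_cons_iff:
  "(\<forall>i. Suc i < length (a # p) \<longrightarrow> Q ((a # p) ! i) ((a # p) ! Suc i)) \<longleftrightarrow>
   (p \<noteq> [] \<longrightarrow> Q a (p ! 0)) \<and> (\<forall>i. Suc i < length p \<longrightarrow> Q (p ! i) (p ! Suc i))"
proof
  assume h: "\<forall>i. Suc i < length (a # p) \<longrightarrow> Q ((a # p) ! i) ((a # p) ! Suc i)"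
  show "(p \<noteq> [] \<longrightarrow> Q a (p ! 0)) \<and> (\<forall>i. Suc i < length p \<longrightarrow> Q (p ! i) (p ! Suc i))"
  proof (intro conjI allI impI)
    assume "p \<noteq> []" then show "Q a (p ! 0)" using h[rule_format, of 0] by simp
  next
    fix i assume "Suc i < length p" then show "Q (p ! i) (p ! Suc i)" using h[rule_format, of "Suc i"] by simp
  qed
next
  assume h: "(p \<noteq> [] \<longrightarrow> Q a (p ! 0)) \<and> (\<forall>i. Suc i < length p \<longrightarrow> Q (p ! i) (p ! Suc i))"
  show "\<forall>i. Suc i < length (a # p) \<longrightarrow> Q ((a # p) ! i) ((a # p) ! Suc i)"
  proof (intro allI impI)
    fix i assume i: "Suc i < length (a # p)"
    show "Q ((a # p) ! i) ((a # p) ! Suc i)"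
    proof (cases i)
      case 0 then show ?thesis using h i by auto
    next
      case (Suc j) then show ?thesis using h i by auto
    qed
  qed
qed

lemma valid_iff:
  "valid e p \<longleftrightarrow> e \<in> Rbas \<and> set p \<subseteq> Bplus \<and> lcompat e p \<and>
     (\<forall>i. Suc i < length p \<longrightarrow> (\<exists>f\<in>Rbas. mult (p ! i) f = Some (p ! i) \<and>
                                     mult f (p ! Suc i) = Some (p ! Suc i)))"
proof (induction p arbitrary: e)
  case Nil
  then show ?case by simp
next
  case (Cons a p)
  show ?case
  proof
    assume v: "valid e (a # p)"
    then have a: "e \<in> Rbas" "a \<in> Bplus" "src a = e" "valid (tgt a) p" by auto
    from Cons.IH[of "tgt a"] a(4) have ih: "set p \<subseteq> Bplus" "lcompat (tgt a) p"
      "\<forall>i. Suc i < length p \<longrightarrow> (\<exists>f\<in>Rbas. mult (p ! i) f = Some (p ! i) \<and> mult f (p ! Suc i) = Some (p ! Suc i))"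
      by auto
    have "p \<noteq> [] \<longrightarrow> (\<exists>f\<in>Rbas. mult a f = Some a \<and> mult f (p ! 0) = Some (p ! 0))"
    proof
      assume "p \<noteq> []"
      then obtain b q where p: "p = b # q" by (cases p) auto
      then have "mult (tgt a) b = Some b" using ih(2) by simp
      moreover have "mult a (tgt a) = Some a" using mult_right[OF tgt_R[OF a(2)] a(2)] by simp
      ultimately show "\<exists>f\<in>Rbas. mult a f = Some a \<and> mult f (p ! 0) = Some (p ! 0)"
        using p tgt_R[OF a(2)] by auto
    qed
    then show "e \<in> Rbas \<and> set (a # p) \<subseteq> Bplus \<and> lcompat e (a # p) \<and>
     (\<forall>i. Suc i < length (a # p) \<longrightarrow> (\<exists>f\<in>Rbas. mult ((a # p) ! i) f = Some ((a # p) ! i) \<and>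
                                     mult f ((a # p) ! Suc i) = Some ((a # p) ! Suc i)))"
      using a ih mult_left[OF a(1) a(2)]
        all_cons_iff[where Q="\<lambda>x y. \<exists>f\<in>Rbas. mult x f = Some x \<and> mult f y = Some y" and a=a and p=p]
      by auto
  next
    assume h: "e \<in> Rbas \<and> set (a # p) \<subseteq> Bplus \<and> lcompat e (a # p) \<and>
     (\<forall>i. Suc i < length (a # p) \<longrightarrow> (\<exists>f\<in>Rbas. mult ((a # p) ! i) f = Some ((a # p) ! i) \<and>
                                     mult f ((a # p) ! Suc i) = Some ((a # p) ! Suc i)))"
    then have a: "e \<in> Rbas" "a \<in> Bplus" "set p \<subseteq> Bplus" "mult e a = Some a"
      and c0: "p \<noteq> [] \<longrightarrow> (\<exists>f\<in>Rbas. mult a f = Some a \<and> mult f (p ! 0) = Some (p ! 0))"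
      and cr: "\<forall>i. Suc i < length p \<longrightarrow> (\<exists>f\<in>Rbas. mult (p ! i) f = Some (p ! i) \<and> mult f (p ! Suc i) = Some (p ! Suc i))"
      using all_cons_iff[where Q="\<lambda>x y. \<exists>f\<in>Rbas. mult x f = Some x \<and> mult f y = Some y" and a=a and p=p]
      by auto
    have "lcompat (tgt a) p"
    proof (cases p)
      case (Cons b q)
      then have b: "b \<in> Bplus" using a(3) by auto
      from c0 Cons have "tgt a = src b" using compat_iff[OF a(2) b] by auto
      then show ?thesis using Cons mult_left[OF tgt_R[OF a(2)] b] by simp
    qed simp
    then have "valid (tgt a) p" using Cons.IH[of "tgt a"] tgt_R[OF a(2)] a(3) cr by blast
    then show "valid e (a # p)" using a mult_left[OF a(1) a(2)] by simp
  qed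
qed

lemma TB_iff: "(e, p) \<in> TB n \<longleftrightarrow> length p = n \<and> valid e p"
  unfolding TB_def valid_iff by auto

lemma valid_R: "valid e p \<Longrightarrow> e \<in> Rbas"
  by (cases p) auto

lemma valid_append: "valid e (u @ w) \<longleftrightarrow> valid e u \<and> valid (endst e u) w"
  by (induction u arbitrary: e) (auto dest: valid_R)

lemma endst_append: "endst e (u @ w) = endst (endst e u) w"
  by (induction u arbitrary: e) auto

lemma endst_R: "valid e p \<Longrightarrow> endst e p \<in> Rbas"
  by (induction p arbitrary: e) auto

lemma valid_last: "valid e p \<Longrightarrow> p \<noteq> [] \<Longrightarrow> endst e p = tgt (last p) \<and> last p \<in> Bplus"
proof (induction p arbitrary: e)
  case Nil then show ?case by simp
next
  case (Cons a p)
  show ?case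
  proof (cases "p = []")
    case True then show ?thesis using Cons.prems by simp
  next
    case False then show ?thesis using Cons.IH[of "tgt a"] Cons.prems by simp
  qed
qed

lemma enc_len[simp]: "length (enc p) = length p" by (simp add: enc_def)
lemma enc_Cons[simp]: "enc (a # p) = (a = xi \<or> a = xiL) # enc p" by (simp add: enc_def)
lemma enc_Nil[simp]: "enc [] = []" by (simp add: enc_def)

definition cR :: "bas \<Rightarrow> int" where "cR e = (if e = idO then 1 else 0)"

lemma tdeg_Cons[simp]: "tdeg (a # p) = deg a + tdeg p" by (simp add: tdeg_def)
lemma tdeg_Nil[simp]: "tdeg [] = 0" by (simp add: tdeg_def)

lemma wt_enc: "valid e p \<Longrightarrow> int (wt (enc p)) = 2 * int (tdeg p) + cR e - cR (endst e p)"
proof (induction p arbitrary: e)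
  case Nil then show ?case by simp
next
  case (Cons a p)
  then have a: "a \<in> Bplus" "src a = e" "valid (tgt a) p" by auto
  have "int (wt (enc p)) = 2 * int (tdeg p) + cR (tgt a) - cR (endst (tgt a) p)"
    using Cons.IH[OF a(3)] .
  then show ?case using a by (auto simp: Bplus_iff cR_def)
qed

lemma letter_props: "s \<in> Rbas \<Longrightarrow> letter s b \<in> Bplus \<and> src (letter s b) = s \<and>
     (letter s b = xi \<or> letter s b = xiL) = b"
  by (cases b) (auto simp: Rbas_iff Bplus_iff)

lemma letter_inv: "a \<in> Bplus \<Longrightarrow> letter (src a) (a = xi \<or> a = xiL) = a"
  by (auto simp: Bplus_iff)

lemma dec_valid: "s \<in> Rbas \<Longrightarrow> valid s (dec s c) \<and> enc (dec s c) = c \<and> length (dec s c) = length c"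
proof (induction c arbitrary: s)
  case Nil then show ?case by simp
next
  case (Cons b c)
  have l: "letter s b \<in> Bplus" "src (letter s b) = s" "(letter s b = xi \<or> letter s b = xiL) = b"
    using letter_props[OF Cons.prems] by auto
  then show ?case using Cons.IH[OF tgt_R[OF l(1)]] Cons.prems by simp
qed

lemma dec_enc: "valid s p \<Longrightarrow> dec s (enc p) = p"
proof (induction p arbitrary: s)
  case Nil then show ?case by simp
next
  case (Cons a p)
  then have "a \<in> Bplus" "src a = s" "valid (tgt a) p" by auto
  then show ?case using Cons.IH letter_inv by auto
qed

lemma merge2:
  assumes "valid s (x # y # v)" "mult x y = Some c"
  shows "valid s (c # v) \<and> endst s (c # v) = endst s (x # y # v) \<and> (c = xi \<or> c = xiL)"
proof -
  have "x \<in> Bplus" "y \<in> Bplus" using assms(1) by auto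
  then have "(x = theta \<and> y = eta \<and> c = xi) \<or> (x = eta \<and> y = theta \<and> c = xiL)"
    using assms(2) by (auto simp: Bplus_iff)
  then show ?thesis using assms(1) by (auto simp: Bplus_iff Rbas_iff)
qed

lemma merge_valid:
  assumes "valid e a" "1 \<le> i" "i < length a" "mult (a ! (i - 1)) (a ! i) = Some c"
  shows "valid e (take (i - 1) a @ c # drop (Suc i) a) \<and>
         endst e (take (i - 1) a @ c # drop (Suc i) a) = endst e a \<and> (c = xi \<or> c = xiL)"
proof -
  let ?u = "take (i - 1) a" and ?v = "drop (Suc i) a"
  have sp: "a = ?u @ a ! (i - 1) # a ! i # ?v" using split_at2[OF assms(2,3)] by simp
  have v: "valid e ?u" "valid (endst e ?u) (a ! (i - 1) # a ! i # ?v)"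
    using assms(1) valid_append[of e ?u] sp by (metis)+
  from merge2[OF v(2) assms(4)] show ?thesis
    using v(1) valid_append endst_append sp by metis
qed

lemma mult_enc:
  assumes "valid e a" "1 \<le> i" "i < length a"
  shows "(mult (a ! (i - 1)) (a ! i) \<noteq> None) \<longleftrightarrow> \<not> enc a ! (i - 1) \<and> \<not> enc a ! i"
proof -
  let ?u = "take (i - 1) a" and ?v = "drop (Suc i) a"
  have sp: "a = ?u @ a ! (i - 1) # a ! i # ?v" using split_at2[OF assms(2,3)] by simp
  have "valid (endst e ?u) (a ! (i - 1) # a ! i # ?v)"
    using assms(1) valid_append[of e ?u] sp by metis
  then have h: "a ! (i - 1) \<in> Bplus" "a ! i \<in> Bplus" "tgt (a ! (i - 1)) = src (a ! i)" by auto
  have "enc a ! (i - 1) = (a ! (i - 1) = xi \<or> a ! (i - 1) = xiL)" "enc a ! i = (a ! i = xi \<or> a ! i = xiL)"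
    using assms by (simp_all add: enc_def)
  then show ?thesis using h by (auto simp: Bplus_iff)
qed

lemma Mbas_eq: "Mbas = {eta}" by (auto simp: Mbas_def B1bas_def Ibas_def)

lemma lactM_eq: "lactM b v y = (if y = eta \<and> b = idL then v eta else 0)"
  by (cases b) (auto simp: lactM_def Mbas_eq)

lemma ractM_eq: "ractM v b y = (if y = eta \<and> b = idO then v eta else 0)"
  by (cases b) (auto simp: ractM_def Mbas_eq)

definition good :: "bas list \<Rightarrow> bool" where
  "good p \<longleftrightarrow> valid idL p \<and> endst idL p = idO"

definition Tm :: "(bool list \<Rightarrow> 'k::field) \<Rightarrow> (bas \<times> bas list) \<Rightarrow> bas \<Rightarrow> 'k" where
  "Tm \<psi> x y = (if y = eta \<and> fst x = idL \<and> good (snd x) then \<psi> (enc (snd x)) else 0)"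

lemma good_nonempty: "good p \<Longrightarrow> p \<noteq> []" by (auto simp: good_def)

lemma good_wt: "good p \<Longrightarrow> int (wt (enc p)) = 2 * int (tdeg p) - 1"
  using wt_enc[of idL p] by (simp add: good_def cR_def)

lemma coch_nz:
  assumes \<phi>: "\<phi> \<in> Cochains n m" and nz: "\<phi> x y \<noteq> 0"
  shows "y = eta \<and> fst x = idL \<and> good (snd x) \<and> length (snd x) = n \<and> 1 = int (tdeg (snd x)) + m"
proof -
  have h1: "\<forall>x y. \<phi> x y \<noteq> 0 \<longrightarrow> x \<in> TB n \<and> y \<in> Mbas \<and> int (deg y) = int (tdeg (snd x)) + m"
    and h2: "\<forall>e\<in>Rbas. \<forall>x\<in>TB n. lactM e (\<phi> x) = (if fst x = e then \<phi> x else (\<lambda>_. 0)) \<and>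
        ractM (\<phi> x) e = (if rcompat x e then \<phi> x else (\<lambda>_. 0))"
    using \<phi> by (auto simp: Cochains_def)
  obtain e p where x: "x = (e, p)" by (cases x)
  have hx: "x \<in> TB n \<and> y \<in> Mbas \<and> int (deg y) = int (tdeg (snd x)) + m"
    using h1 nz by blast
  then have TB: "x \<in> TB n" and y: "y = eta" and dg: "int (deg y) = int (tdeg (snd x)) + m"
    by (auto simp: Mbas_eq)
  have vp: "valid e p" "length p = n" using TB x TB_iff by auto
  have eR: "e \<in> Rbas" using valid_R[OF vp(1)] .
  have supp: "\<phi> x = (\<lambda>y'. if y' = eta then \<phi> x eta else 0)"
  proof
    fix y' show "\<phi> x y' = (if y' = eta then \<phi> x eta else 0)"
      using h1[rule_format, of x y'] by (cases "y' = eta") (auto simp: Mbas_eq)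
  qed
  have l: "lactM idO (\<phi> x) = (if fst x = idO then \<phi> x else (\<lambda>_. 0))" using h2 TB by (auto simp: Rbas_def)
  have "lactM idO (\<phi> x) = (\<lambda>_. 0)" by (simp add: fun_eq_iff lactM_eq)
  then have "e \<noteq> idO" using l nz x by (auto simp: fun_eq_iff)
  then have eL: "e = idL" using eR by (auto simp: Rbas_def)
  have r: "ractM (\<phi> x) idO = (if rcompat x idO then \<phi> x else (\<lambda>_. 0))" using h2 TB by (auto simp: Rbas_def)
  have "ractM (\<phi> x) idO = \<phi> x" by (subst (2) supp) (simp add: fun_eq_iff ractM_eq)
  have rc: "rcompat x idO"
  proof (rule ccontr)
    assume "\<not> rcompat x idO"
    then have "\<phi> x = (\<lambda>_. 0)" using r \<open>ractM (\<phi> x) idO = \<phi> x\<close> by simp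
    then show False using nz by simp
  qed
  have "p \<noteq> []" using rc x eL by (auto simp: rcompat_def)
  then have "mult (last p) idO = Some (last p)" using rc x by (simp add: rcompat_def)
  moreover have "endst idL p = tgt (last p)" "last p \<in> Bplus" using valid_last[of idL p] vp eL \<open>p \<noteq> []\<close> by auto
  ultimately have "endst idL p = idO" using mult_right[of idO "last p"] by (simp add: Rbas_def)
  then show ?thesis using vp eL y dg x by (simp add: good_def)
qed

lemma Tm_in:
  fixes \<psi> :: "bool list \<Rightarrow> 'k::field"
  assumes \<psi>: "\<psi> \<in> AC (2 * D + 1) n"
  shows "Tm \<psi> \<in> Cochains n (- int D)"
  unfolding Cochains_def
proof (intro CollectI conjI allI impI ballI)
  fix x y assume nz: "Tm \<psi> x y \<noteq> 0"
  then have c: "y = eta" "fst x = idL" "good (snd x)" and nz': "\<psi> (enc (snd x)) \<noteq> 0"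
    by (auto simp: Tm_def split: if_splits)
  have w: "wt (enc (snd x)) = 2 * D + 1" "length (snd x) = n" using ACD[OF \<psi> nz'] by auto
  have "int (wt (enc (snd x))) = 2 * int (tdeg (snd x)) - 1" using good_wt c(3) by blast
  then have td: "int (tdeg (snd x)) = int D + 1" using w by simp
  have "valid idL (snd x)" using c(3) by (simp add: good_def)
  then have "(fst x, snd x) \<in> TB n" using c(2) w(2) TB_iff[of idL "snd x" n] by simp
  then show "x \<in> TB n" by simp
  show "y \<in> Mbas" using c by (simp add: Mbas_eq)
  show "int (deg y) = int (tdeg (snd x)) + - int D" using c td by simp
next
  fix e x assume e: "e \<in> Rbas" and x: "x \<in> TB n"
  have s: "y \<noteq> eta \<Longrightarrow> Tm \<psi> x y = 0" for y by (simp add: Tm_def)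
  show "lactM e (Tm \<psi> x) = (if fst x = e then Tm \<psi> x else (\<lambda>_. 0))"
  proof (cases "Tm \<psi> x eta = 0")
    case True
    have "Tm \<psi> x = (\<lambda>_. 0)"
    proof (rule ext)
      fix y show "Tm \<psi> x y = 0" using True s[of y] by (cases "y = eta") auto
    qed
    then show ?thesis by (simp add: fun_eq_iff lactM_eq)
  next
    case False
    then have "fst x = idL" by (auto simp: Tm_def split: if_splits)
    show ?thesis
    proof (rule ext)
      fix y show "lactM e (Tm \<psi> x) y = (if fst x = e then Tm \<psi> x else (\<lambda>_. 0)) y"
        using e s[of y] \<open>fst x = idL\<close> by (cases "y = eta") (auto simp: lactM_eq Rbas_def)
    qed
  qed
  show "ractM (Tm \<psi> x) e = (if rcompat x e then Tm \<psi> x else (\<lambda>_. 0))"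
  proof (cases "Tm \<psi> x eta = 0")
    case True
    have "Tm \<psi> x = (\<lambda>_. 0)"
    proof (rule ext)
      fix y show "Tm \<psi> x y = 0" using True s[of y] by (cases "y = eta") auto
    qed
    then show ?thesis by (simp add: fun_eq_iff ractM_eq)
  next
    case False
    then have g: "good (snd x)" by (auto simp: Tm_def split: if_splits)
    then have ne: "snd x \<noteq> []" by (rule good_nonempty)
    have "endst idL (snd x) = tgt (last (snd x))" "last (snd x) \<in> Bplus"
      using valid_last[of idL "snd x"] g ne by (auto simp: good_def)
    then have "rcompat x e \<longleftrightarrow> e = idO"
      using g ne mult_right[OF e] by (auto simp: rcompat_def good_def)
    show ?thesis
    proof (rule ext)
      fix y show "ractM (Tm \<psi> x) e y = (if rcompat x e then Tm \<psi> x else (\<lambda>_. 0)) y"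
        using e s[of y] \<open>rcompat x e \<longleftrightarrow> e = idO\<close> by (cases "y = eta") (auto simp: ractM_eq Rbas_def)
    qed
  qed
qed

lemma Tm_recover:
  fixes \<psi> :: "bool list \<Rightarrow> 'k::field"
  assumes \<psi>: "\<psi> \<in> AC (2 * D + 1) n"
  shows "\<psi> w = Tm \<psi> (idL, dec idL w) eta"
proof -
  have dv: "valid idL (dec idL w)" "enc (dec idL w) = w" using dec_valid[of idL w] by (auto simp: Rbas_def)
  show ?thesis
  proof (cases "\<psi> w = 0")
    case True then show ?thesis using dv by (simp add: Tm_def)
  next
    case False
    then have w: "wt w = 2 * D + 1" using ACD[OF \<psi>] by blast
    have "int (wt (enc (dec idL w))) = 2 * int (tdeg (dec idL w)) + cR idL - cR (endst idL (dec idL w))"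
      by (rule wt_enc[OF dv(1)])
    then have eq: "int (2 * D + 1) = 2 * int (tdeg (dec idL w)) - cR (endst idL (dec idL w))"
      using w dv(2) by (simp add: cR_def)
    have "endst idL (dec idL w) = idO"
    proof (rule ccontr)
      assume "endst idL (dec idL w) \<noteq> idO"
      then have "int (2 * D + 1) = 2 * int (tdeg (dec idL w))" using eq by (simp add: cR_def)
      then show False by presburger
    qed
    then show ?thesis using dv by (simp add: Tm_def good_def)
  qed
qed

lemma Tm_inj:
  fixes \<psi> \<psi>' :: "bool list \<Rightarrow> 'k::field"
  assumes "\<psi> \<in> AC (2 * D + 1) n" "\<psi>' \<in> AC (2 * D + 1) n" "Tm \<psi> = Tm \<psi>'"
  shows "\<psi> = \<psi>'"
proof
  fix w show "\<psi> w = \<psi>' w" using Tm_recover[OF assms(1), of w] Tm_recover[OF assms(2), of w] assms(3) by simp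
qed

lemma Tm_0[simp]: "Tm 0 = 0" by (simp add: Tm_def fun_eq_iff)

lemma Tm_onto:
  fixes \<phi> :: "(bas \<times> bas list) \<Rightarrow> bas \<Rightarrow> 'k::field"
  assumes \<phi>: "\<phi> \<in> Cochains n (- int D)"
  shows "\<phi> \<in> Tm ` AC (2 * D + 1) n"
proof -
  define \<psi> :: "bool list \<Rightarrow> 'k" where
    "\<psi> w = (if wt w = 2 * D + 1 \<and> length w = n then \<phi> (idL, dec idL w) eta else 0)" for w
  have \<psi>AC: "\<psi> \<in> AC (2 * D + 1) n" by (rule ACI) (auto simp: \<psi>_def split: if_splits)
  have "Tm \<psi> = \<phi>"
  proof (intro ext)
    fix x y
    show "Tm \<psi> x y = \<phi> x y"
    proof (cases "y = eta \<and> fst x = idL \<and> good (snd x)")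
      case True
      obtain p where x: "x = (idL, p)" using True by (cases x) auto
      have g: "good p" using True x by simp
      have dp: "dec idL (enc p) = p" using g dec_enc by (auto simp: good_def)
      show ?thesis
      proof (cases "wt (enc p) = 2 * D + 1 \<and> length p = n")
        case True
        then show ?thesis using x g dp \<open>y = eta \<and> _\<close> by (simp add: Tm_def \<psi>_def)
      next
        case False
        have "\<phi> x y = 0"
        proof (rule ccontr)
          assume "\<phi> x y \<noteq> 0"
          from coch_nz[OF \<phi> this] have "length p = n" "1 = int (tdeg p) - int D" using x by auto
          moreover have "int (wt (enc p)) = 2 * int (tdeg p) - 1" using good_wt g by blast
          ultimately show False using False by simp
        qed
        then show ?thesis using x g False \<open>y = eta \<and> _\<close> by (auto simp: Tm_def \<psi>_def)
      qed
    next
      case False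
      then have "\<phi> x y = 0" using coch_nz[OF \<phi>] by blast
      then show ?thesis using False by (auto simp: Tm_def)
    qed
  qed
  then show ?thesis using \<psi>AC by blast
qed

lemma valid_set: "valid e a \<Longrightarrow> set a \<subseteq> Bplus"
  using valid_iff by blast

lemma ev_Tm: "ev (Tm \<psi>) q y = (if lcompat idL q then Tm \<psi> (idL, q) y else 0)"
proof -
  let ?S = "{e \<in> Rbas. lcompat e q}"
  have fin: "finite ?S" by (simp add: Rbas_def)
  have "ev (Tm \<psi>) q y = (\<Sum>e\<in>?S. if e = idL then Tm \<psi> (e, q) y else 0)"
    unfolding ev_def by (rule sum.cong) (auto simp: Tm_def)
  also have "\<dots> = (if idL \<in> ?S then Tm \<psi> (idL, q) y else 0)"
    by (rule sum.delta[OF fin])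
  finally show ?thesis by (simp add: Rbas_def)
qed

lemma enc_merge:
  assumes "c = xi \<or> c = xiL"
  shows "enc (take (i - 1) a @ c # drop (Suc i) a) = take (i - 1) (enc a) @ True # drop (Suc i) (enc a)"
  using assms by (auto simp: enc_def take_map drop_map)

lemma valid_src_unique: "valid e q \<Longrightarrow> valid e' q \<Longrightarrow> q \<noteq> [] \<Longrightarrow> e = e'"
  by (cases q) auto

lemma lcompat_valid: "valid e q \<Longrightarrow> lcompat e q"
  using valid_iff by blast

lemma term_eq:
  fixes \<psi> :: "bool list \<Rightarrow> 'k::field"
  assumes va: "valid e a" and i: "1 \<le> i" "i < length a"
  shows "(case mult (a ! (i - 1)) (a ! i) of None \<Rightarrow> 0
           | Some c \<Rightarrow> ev (Tm \<psi>) (take (i - 1) a @ c # drop (Suc i) a) y) =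
         (if y = eta \<and> e = idL \<and> good a then
            (if \<not> enc a ! (i - 1) \<and> \<not> enc a ! i then \<psi> (take (i - 1) (enc a) @ True # drop (Suc i) (enc a)) else 0)
          else 0)"
proof (cases "mult (a ! (i - 1)) (a ! i)")
  case None
  then show ?thesis using mult_enc[OF va i] by auto
next
  case (Some c)
  let ?q = "take (i - 1) a @ c # drop (Suc i) a"
  have m: "valid e ?q" "endst e ?q = endst e a" "c = xi \<or> c = xiL"
    using merge_valid[OF va i Some] by auto
  have ne: "\<not> enc a ! (i - 1) \<and> \<not> enc a ! i" using mult_enc[OF va i] Some by auto
  have eq: "enc ?q = take (i - 1) (enc a) @ True # drop (Suc i) (enc a)"
    by (rule enc_merge[OF m(3)])
  have qne: "?q \<noteq> []" by simp
  show ?thesis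
  proof (cases "e = idL")
    case True
    have "lcompat idL ?q" using lcompat_valid m(1) True by simp
    moreover have "good ?q \<longleftrightarrow> good a" using m True va by (simp add: good_def)
    ultimately show ?thesis using Some True ne eq by (simp add: ev_Tm Tm_def)
  next
    case False
    have "\<not> good ?q" using valid_src_unique[OF m(1) _ qne] False by (auto simp: good_def)
    then show ?thesis using Some False by (simp add: ev_Tm Tm_def)
  qed
qed

lemma hdelta_Tm:
  fixes \<psi> :: "bool list \<Rightarrow> 'k::field"
  assumes \<psi>: "\<psi> \<in> AC N n"
  shows "hdelta n (Tm \<psi>) = Tm (ad \<psi>)"
proof (intro ext)
  fix x :: "bas \<times> bas list" and y :: bas
  obtain e a where x: "x = (e, a)" by (cases x)
  show "hdelta n (Tm \<psi>) x y = Tm (ad \<psi>) x y"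
  proof (cases "x \<in> TB (Suc n)")
    case False
    have "Tm (ad \<psi>) x y = 0"
    proof (rule ccontr)
      assume nz: "Tm (ad \<psi>) x y \<noteq> 0"
      then have c: "e = idL" "good a" "ad \<psi> (enc a) \<noteq> 0" using x by (auto simp: Tm_def split: if_splits)
      have "length a = Suc n" using ACD[OF ad_AC[OF \<psi>] c(3)] by simp
      then have "x \<in> TB (Suc n)" using x c by (simp add: TB_iff good_def)
      then show False using False by simp
    qed
    then show ?thesis using False by (simp add: hdelta_def)
  next
    case True
    then have va: "valid e a" and la: "length a = Suc n" using x TB_iff by auto
    have ane: "a \<noteq> []" using la by auto
    have sa: "set a \<subseteq> Bplus" using valid_set[OF va] .
    have "hd a \<in> Bplus" using sa hd_in_set[OF ane] by blast
    then have hd: "hd a \<noteq> idL" by (auto simp: Bplus_def)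
    have "last a \<in> Bplus" using sa last_in_set[OF ane] by blast
    then have lst: "last a \<noteq> idO" by (auto simp: Bplus_def)
    have "hdelta n (Tm \<psi>) x y = (\<Sum>i\<in>{1..n}. (-1) ^ i *
           (case mult (a ! (i - 1)) (a ! i) of None \<Rightarrow> 0
            | Some c \<Rightarrow> ev (Tm \<psi>) (take (i - 1) a @ c # drop (Suc i) a) y))"
      using True x hd lst by (simp add: hdelta_def Let_def lactM_eq ractM_eq)
    also have "\<dots> = (\<Sum>i\<in>{1..n}. (-1) ^ i *
         (if y = eta \<and> e = idL \<and> good a then
            (if \<not> enc a ! (i - 1) \<and> \<not> enc a ! i then \<psi> (take (i - 1) (enc a) @ True # drop (Suc i) (enc a)) else 0)
          else 0))"
    proof (rule sum.cong[OF refl])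
      fix i assume "i \<in> {1..n}"
      then have ii: "1 \<le> i" "i < length a" using la by auto
      then show "(-1) ^ i * (case mult (a ! (i - 1)) (a ! i) of None \<Rightarrow> 0
            | Some c \<Rightarrow> ev (Tm \<psi>) (take (i - 1) a @ c # drop (Suc i) a) y) =
          (-1) ^ i * (if y = eta \<and> e = idL \<and> good a then
            (if \<not> enc a ! (i - 1) \<and> \<not> enc a ! i then \<psi> (take (i - 1) (enc a) @ True # drop (Suc i) (enc a)) else 0)
          else 0)"
        using term_eq[OF va ii, of \<psi> y] by (simp only:)
    qed
    also have "\<dots> = (if y = eta \<and> e = idL \<and> good a then ad \<psi> (enc a) else 0)"
    proof (cases "y = eta \<and> e = idL \<and> good a")
      case True then show ?thesis using la by (simp add: ad_def)
    next
      case False then show ?thesis by (simp only: if_not_P[OF False] if_False mult_zero_right sum.neutral_const)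
    qed
    also have "\<dots> = Tm (ad \<psi>) x y" using x by (simp add: Tm_def)
    finally show ?thesis .
  qed
qed

lemma vs_cscale: "vector_space (cscale :: 'k::field \<Rightarrow> _)"
  by unfold_locales (auto simp: cscale_def algebra_simps fun_eq_iff)

interpretation C: vector_space "cscale :: 'k::field \<Rightarrow> _"
  by (rule vs_cscale)

interpretation ACP: vector_space_pair "acs :: 'k::field \<Rightarrow> _" "cscale :: 'k \<Rightarrow> _"
  by unfold_locales

lemma Tm_plus: "Tm (a + b) = Tm a + Tm b"
  by (simp add: fun_eq_iff Tm_def)

lemma Tm_acs: "Tm (acs c a) = cscale c (Tm a)"
  by (simp add: fun_eq_iff Tm_def cscale_def)

lemma linear_Tm: "Vector_Spaces.linear acs cscale (Tm :: (bool list \<Rightarrow> 'k::field) \<Rightarrow> _)"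
  unfolding Vector_Spaces.linear_iff using vs_acs vs_cscale Tm_plus Tm_acs by blast

lemma Coch_eq: "Cochains n (- int D) = Tm ` (AC (2 * D + 1) n :: (bool list \<Rightarrow> 'k::field) set)"
  using Tm_onto Tm_in by blast

lemma Cocyc_eq: "Cocycles n (- int D) = Tm ` (AZ (2 * D + 1) n :: (bool list \<Rightarrow> 'k::field) set)"
proof
  show "Cocycles n (- int D) \<subseteq> Tm ` (AZ (2 * D + 1) n :: (bool list \<Rightarrow> 'k) set)"
  proof
    fix \<phi> :: "(bas \<times> bas list) \<Rightarrow> bas \<Rightarrow> 'k" assume "\<phi> \<in> Cocycles n (- int D)"
    then have c: "\<phi> \<in> Cochains n (- int D)" "hdelta n \<phi> = 0" by (auto simp: Cocycles_def)
    then obtain \<psi> where \<psi>: "\<psi> \<in> AC (2 * D + 1) n" "\<phi> = Tm \<psi>" using Tm_onto by blast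
    have "Tm (ad \<psi>) = Tm 0" using c \<psi> hdelta_Tm[OF \<psi>(1)] by simp
    then have "ad \<psi> = 0" using Tm_inj[OF ad_AC[OF \<psi>(1)] AC_0] by blast
    then show "\<phi> \<in> Tm ` AZ (2 * D + 1) n" using \<psi> by (auto simp: AZ_def)
  qed
  show "Tm ` (AZ (2 * D + 1) n :: (bool list \<Rightarrow> 'k) set) \<subseteq> Cocycles n (- int D)"
  proof
    fix \<phi> :: "(bas \<times> bas list) \<Rightarrow> bas \<Rightarrow> 'k" assume "\<phi> \<in> Tm ` AZ (2 * D + 1) n"
    then obtain \<psi> where \<psi>: "\<psi> \<in> AZ (2 * D + 1) n" "\<phi> = Tm \<psi>" by blast
    then have "\<psi> \<in> AC (2 * D + 1) n" "ad \<psi> = 0" by (auto simp: AZ_def)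
    then have ac: "\<psi> \<in> AC (2 * D + 1) n" by simp
    have "Tm \<psi> \<in> Cochains n (- int D)" by (rule Tm_in[OF ac])
    moreover have "hdelta n (Tm \<psi>) = Tm (ad \<psi>)" by (rule hdelta_Tm[OF ac])
    ultimately show "\<phi> \<in> Cocycles n (- int D)" using \<psi> \<open>ad \<psi> = 0\<close> by (simp add: Cocycles_def)
  qed
qed

lemma Cobd_eq: "Coboundaries n (- int D) = Tm ` (AB (2 * D + 1) n :: (bool list \<Rightarrow> 'k::field) set)"
proof (cases "n = 0")
  case True
  then show ?thesis by (simp add: Coboundaries_def AB_def)
next
  case False
  have "Coboundaries n (- int D) = hdelta (n - 1) ` Tm ` (AC (2 * D + 1) (n - 1) :: (bool list \<Rightarrow> 'k) set)"
    using False by (simp add: Coboundaries_def Coch_eq)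
  also have "\<dots> = Tm ` ad ` (AC (2 * D + 1) (n - 1) :: (bool list \<Rightarrow> 'k) set)"
    unfolding image_image by (rule image_cong[OF refl]) (rule hdelta_Tm)
  also have "\<dots> = Tm ` (AB (2 * D + 1) n :: (bool list \<Rightarrow> 'k) set)" using False by (simp add: AB_def)
  finally show ?thesis .
qed

lemma dim_Tm:
  assumes sub: "A.subspace S" and SAC: "S \<subseteq> (AC (2 * D + 1) n :: (bool list \<Rightarrow> 'k::field) set)"
  shows "C.dim (Tm ` S) = A.dim S"
proof -
  have "A.span S = S" using A.span_eq_iff sub by blast
  moreover have "inj_on Tm S" using Tm_inj SAC by (meson inj_onI subsetD)
  ultimately have "inj_on Tm (A.span S)" by (simp only:)
  from ACP.dim_image_eq_gen[OF linear_Tm this] show ?thesis .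
qed

lemma HH_neg: "HHdim TYPE('k::field) n (- int D) = ahh TYPE('k) (2 * D + 1) n"
proof -
  have "HHdim TYPE('k) n (- int D) = C.dim (Tm ` (AZ (2 * D + 1) n :: (bool list \<Rightarrow> 'k) set))
      - C.dim (Tm ` (AB (2 * D + 1) n :: (bool list \<Rightarrow> 'k) set))"
    unfolding HHdim_def Cocyc_eq Cobd_eq ..
  also have "\<dots> = ahh TYPE('k) (2 * D + 1) n"
    unfolding ahh_def dim_Tm[OF subspace_AZ AZ_AC] dim_Tm[OF subspace_AB order_trans[OF AB_AZ AZ_AC]] ..
  finally show ?thesis .
qed

lemma HH_pos:
  assumes m: "1 \<le> m"
  shows "HHdim TYPE('k::field) n m = 0"
proof -
  have "Cocycles n m \<subseteq> C.span ({} :: ((bas \<times> bas list) \<Rightarrow> bas \<Rightarrow> 'k) set)"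
  proof
    fix \<phi> :: "(bas \<times> bas list) \<Rightarrow> bas \<Rightarrow> 'k" assume "\<phi> \<in> Cocycles n m"
    then have c: "\<phi> \<in> Cochains n m" by (simp add: Cocycles_def)
    have "\<phi> = 0"
    proof (intro ext)
      fix x y show "\<phi> x y = 0 x y"
      proof (rule ccontr)
        assume "\<phi> x y \<noteq> 0 x y"
        then have "\<phi> x y \<noteq> 0" by simp
        from coch_nz[OF c this] have g: "good (snd x)" "1 = int (tdeg (snd x)) + m" by auto
        have "int (wt (enc (snd x))) = 2 * int (tdeg (snd x)) - 1" using good_wt g(1) by blast
        then show False using g(2) m by simp
      qed
    qed
    then show "\<phi> \<in> C.span {}" by (simp add: C.span_empty)
  qed
  then have "C.dim (Cocycles n m :: ((bas \<times> bas list) \<Rightarrow> bas \<Rightarrow> 'k) set) \<le> card ({} :: ((bas \<times> bas list) \<Rightarrow> bas \<Rightarrow> 'k) set)"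
    by (intro C.dim_le_card) auto
  then show ?thesis unfolding HHdim_def by simp
qed

lemma fam:
  assumes k: "1 \<le> k"
  shows "HHdim TYPE('k::field) n (int k - int n) = (if n = 4 * k - 3 \<or> n = 4 * k - 2 then 1 else 0)"
proof (cases "k \<le> n")
  case True
  define D where "D = n - k"
  have m: "int k - int n = - int D" using True D_def by simp
  have "HHdim TYPE('k) n (int k - int n) = ahh TYPE('k) (2 * D + 1) n" unfolding m by (rule HH_neg)
  also have "\<dots> = (if 2 * (2 * D + 1) = 3 * n \<or> 2 * (2 * D + 1) + 1 = 3 * n then 1 else 0)"
    by (rule ahh_formula)
  also have "(2 * (2 * D + 1) = 3 * n \<or> 2 * (2 * D + 1) + 1 = 3 * n) \<longleftrightarrow> (n = 4 * k - 3 \<or> n = 4 * k - 2)"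
    using True k D_def by auto
  finally show ?thesis .
next
  case False
  then have "HHdim TYPE('k) n (int k - int n) = 0" by (intro HH_pos) simp
  moreover have "\<not> (n = 4 * k - 3 \<or> n = 4 * k - 2)" using False k by auto
  ultimately show ?thesis by simp
qed

theorem mainTheorem6:
  assumes "(2::'k::field) \<noteq> 0" and "(3::'k) \<noteq> 0"
  shows "(\<forall>n. HHdim TYPE('k) n (1 - int n) = (if n \<in> {1, 2} then 1 else 0)) \<and>
         (\<forall>n. HHdim TYPE('k) n (2 - int n) = (if n \<in> {5, 6} then 1 else 0)) \<and>
         (\<forall>n. HHdim TYPE('k) n (3 - int n) = (if n \<in> {9, 10} then 1 else 0)) \<and>
         (\<forall>n. HHdim TYPE('k) n (4 - int n) = (if n \<in> {13, 14} then 1 else 0))"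
proof (intro conjI allI)
  fix n
  show "HHdim TYPE('k) n (1 - int n) = (if n \<in> {1, 2} then 1 else 0)"
    using fam[of 1 n] by auto
  show "HHdim TYPE('k) n (2 - int n) = (if n \<in> {5, 6} then 1 else 0)"
    using fam[of 2 n] by auto
  show "HHdim TYPE('k) n (3 - int n) = (if n \<in> {9, 10} then 1 else 0)"
    using fam[of 3 n] by auto
  show "HHdim TYPE('k) n (4 - int n) = (if n \<in> {13, 14} then 1 else 0)"
    using fam[of 4 n] by auto
qed

end
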